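(* Let $n_1,n_2,n_3$ be integers with $3\le n_1,n_2\le n_3$ and $3\max(n_1,n_2)\le 2n_3\le n_1n_2$. Let $W$ be any set produced by the Middle Cone Construction described below and $u=(n_1+1,n_2+1,n_3+1)$. Then $W$ is a resolving set of $K(\mathbf{n})=K_{n_1}\times K_{n_2}\times K_{n_3}$, and $W\cup\{u\}$ is a resolving set of $K(\mathbf{n}+\mathbf{1})=K_{n_1+1}\times K_{n_2+1}\times K_{n_3+1}$.
   Context: $K(\mathbf{n})$ is the direct product of complete graphs: vertices are triples $(x_1,x_2,x_3)$, $1\le x_i\le n_i$, adjacent iff they differ in every coordinate. A set $W$ of vertices is resolving if for every two distinct vertices $x,y\notin W$ some $w\in W$ has $d(x,w)\ne d(y,w)$ ($d$ = graph distance). Multiplicities: write $n_3=qn_1+r$, $0\le r\le n_1-1$. If $r\le n_1-r$, $(\ell_1,\dots,\ell_{n_1})$ is $(q+1,q)$ repeated $r$ times followed by $n_1-2r$ copies of $q$; if $r>n_1-r$, it is $(q+1,q)$ repeated $n_1-r$ times followed by $2r-n_1$ copies of $q+1$. Let $L_i=\sum_{j<i}\ell_j$; block $i$ is the set of columns $c$ with $L_i<c\le L_i+\ell_i$; $s_i=L_i+1$. Middle Cone Construction: $W=W^L\cup W^R$, each consisting of $n_3$ landmarks indexed by columns $c=1,\dots,n_3$. Left column $c$ in block $i$ is $(i,y^L_c,c)$; right column $c$ in block $i$ is $(i+1,y^R_c,c)$ with $n_1+1$ read as $1$. Even $n_2$, $h=n_2/2$: $y^L_c=((c-1)\bmod h)+1$,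 $y^R_c=h+((c-1)\bmod h)+1$. Odd $n_2$, $f=(n_2-1)/2$, $k=\#\{i:\ell_i>f\}$: let $S=\{s_i:\ell_i>f\}$ if $k\ge2$ and $S=\{1\}$ if $k\le1$. Set $y^L_c=n_2$ for $c\in S$ and fill the other left columns in increasing order with $1,\dots,f,1,\dots,f,\dots$; set $y^R_c=n_2$ for $c\in S+1$ and fill the other right columns in increasing order with $f+1,\dots,2f,f+1,\dots,2f,\dots$. If $k\le1$, additionally change one left landmark of the form $(x,1,z)$ with $x\notin\{1,2,n_1\}$ to $(x,n_2,z)$ (any such choice). *)

theory Defs
  imports Main "HOL-Library.Extended_Nat"
begin

type_synonym vtx = "nat \<times> nat \<times> nat"

definition KV :: "nat \<Rightarrow> nat \<Rightarrow> nat \<Rightarrow> vtx set" where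
  "KV n1 n2 n3 = {1..n1} \<times> {1..n2} \<times> {1..n3}"

definition Kadj :: "vtx \<Rightarrow> vtx \<Rightarrow> bool" where
  "Kadj x y \<longleftrightarrow> fst x \<noteq> fst y \<and> fst (snd x) \<noteq> fst (snd y) \<and> snd (snd x) \<noteq> snd (snd y)"

definition KE :: "nat \<Rightarrow> nat \<Rightarrow> nat \<Rightarrow> vtx rel" where
  "KE n1 n2 n3 = {(x, y). x \<in> KV n1 n2 n3 \<and> y \<in> KV n1 n2 n3 \<and> Kadj x y}"

definition Kdist :: "nat \<Rightarrow> nat \<Rightarrow> nat \<Rightarrow> vtx \<Rightarrow> vtx \<Rightarrow> enat" where
  "Kdist n1 n2 n3 x y =
     (if \<exists>k. (x, y) \<in> (KE n1 n2 n3) ^^ k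
      then enat (LEAST k. (x, y) \<in> (KE n1 n2 n3) ^^ k) else \<infinity>)"

definition resolving :: "nat \<Rightarrow> nat \<Rightarrow> nat \<Rightarrow> vtx set \<Rightarrow> bool" where
  "resolving n1 n2 n3 W \<longleftrightarrow> W \<subseteq> KV n1 n2 n3 \<and>
     (\<forall>x \<in> KV n1 n2 n3 - W. \<forall>y \<in> KV n1 n2 n3 - W. x \<noteq> y \<longrightarrow>
        (\<exists>w \<in> W. Kdist n1 n2 n3 x w \<noteq> Kdist n1 n2 n3 y w))"

definition ell :: "nat \<Rightarrow> nat \<Rightarrow> nat \<Rightarrow> nat" where
  "ell n1 n3 i =
     (let q = n3 div n1; r = n3 mod n1 in
      if r \<le> n1 - r then
        (if i \<le> 2 * r then (if odd i then q + 1 else q) else q)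
      else
        (if i \<le> 2 * (n1 - r) then (if odd i then q + 1 else q) else q + 1))"

definition Lsum :: "nat \<Rightarrow> nat \<Rightarrow> nat \<Rightarrow> nat" where
  "Lsum n1 n3 i = (\<Sum>j \<in> {1..<i}. ell n1 n3 j)"

definition sblk :: "nat \<Rightarrow> nat \<Rightarrow> nat \<Rightarrow> nat" where
  "sblk n1 n3 i = Lsum n1 n3 i + 1"

definition blk :: "nat \<Rightarrow> nat \<Rightarrow> nat \<Rightarrow> nat" where
  "blk n1 n3 c = (THE i. i \<in> {1..n1} \<and> Lsum n1 n3 i < c \<and> c \<le> Lsum n1 n3 i + ell n1 n3 i)"

definition rank_out :: "nat set \<Rightarrow> nat \<Rightarrow> nat" where
  "rank_out A c = card {c' \<in> {1..c}. c' \<notin> A}"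

definition kcnt :: "nat \<Rightarrow> nat \<Rightarrow> nat \<Rightarrow> nat" where
  "kcnt n1 n2 n3 = card {i \<in> {1..n1}. ell n1 n3 i > (n2 - 1) div 2}"

definition Sset :: "nat \<Rightarrow> nat \<Rightarrow> nat \<Rightarrow> nat set" where
  "Sset n1 n2 n3 =
     (if kcnt n1 n2 n3 \<ge> 2
      then {sblk n1 n3 i | i. i \<in> {1..n1} \<and> ell n1 n3 i > (n2 - 1) div 2}
      else {1})"

definition yL :: "nat \<Rightarrow> nat \<Rightarrow> nat \<Rightarrow> nat \<Rightarrow> nat" where
  "yL n1 n2 n3 c =
     (if even n2 then ((c - 1) mod (n2 div 2)) + 1
      else if c \<in> Sset n1 n2 n3 then n2
      else ((rank_out (Sset n1 n2 n3) c - 1) mod ((n2 - 1) div 2)) + 1)"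

definition yR :: "nat \<Rightarrow> nat \<Rightarrow> nat \<Rightarrow> nat \<Rightarrow> nat" where
  "yR n1 n2 n3 c =
     (if even n2 then n2 div 2 + ((c - 1) mod (n2 div 2)) + 1
      else if c \<in> (\<lambda>s. s + 1) ` Sset n1 n2 n3 then n2
      else (n2 - 1) div 2
           + ((rank_out ((\<lambda>s. s + 1) ` Sset n1 n2 n3) c - 1) mod ((n2 - 1) div 2)) + 1)"

definition WL :: "nat \<Rightarrow> nat \<Rightarrow> (nat \<Rightarrow> nat) \<Rightarrow> vtx set" where
  "WL n1 n3 y = {(blk n1 n3 c, y c, c) | c. c \<in> {1..n3}}"

definition WR :: "nat \<Rightarrow> nat \<Rightarrow> nat \<Rightarrow> vtx set" where
  "WR n1 n2 n3 = {(if blk n1 n3 c = n1 then 1 else blk n1 n3 c + 1, yR n1 n2 n3 c, c) | c. c \<in> {1..n3}}"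

text \<open>W is a set produced by the Middle Cone Construction (with any admissible choice
  of the modified left landmark in the case n2 odd, k \<le> 1).\<close>
definition middle_cone :: "nat \<Rightarrow> nat \<Rightarrow> nat \<Rightarrow> vtx set \<Rightarrow> bool" where
  "middle_cone n1 n2 n3 W \<longleftrightarrow>
     (if even n2 \<or> kcnt n1 n2 n3 \<ge> 2
      then W = WL n1 n3 (yL n1 n2 n3) \<union> WR n1 n2 n3
      else (\<exists>z \<in> {1..n3}. yL n1 n2 n3 z = 1 \<and> blk n1 n3 z \<notin> {1, 2, n1} \<and>
              W = WL n1 n3 ((yL n1 n2 n3)(z := n2)) \<union> WR n1 n2 n3))"

end

theory Submission
  imports Defs
begin


lemma third_val: "3 \<le> (n::nat) \<Longrightarrow> \<exists>c\<in>{1..n}. c \<noteq> a \<and> c \<noteq> b"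
proof -
  assume "3 \<le> n"
  then show ?thesis
    by (cases "a = 1 \<or> b = 1"; cases "a = 2 \<or> b = 2")
       (auto intro: bexI[of _ 1] bexI[of _ 2] bexI[of _ 3])
qed

lemma KE_iff: "(x, y) \<in> KE n1 n2 n3 \<longleftrightarrow> x \<in> KV n1 n2 n3 \<and> y \<in> KV n1 n2 n3 \<and> Kadj x y"
  by (simp add: KE_def)

lemma Kdist_eq:
  assumes "3 \<le> n1" "3 \<le> n2" "3 \<le> n3" "x \<in> KV n1 n2 n3" "y \<in> KV n1 n2 n3" "x \<noteq> y"
  shows "Kdist n1 n2 n3 x y = (if Kadj x y then 1 else 2)"
proof -
  obtain x1 x2 x3 where x: "x = (x1,x2,x3)" by (cases x) auto
  obtain y1 y2 y3 where y: "y = (y1,y2,y3)" by (cases y) auto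
  obtain z1 where z1: "z1 \<in> {1..n1}" "z1 \<noteq> x1" "z1 \<noteq> y1" using third_val[OF assms(1)] by blast
  obtain z2 where z2: "z2 \<in> {1..n2}" "z2 \<noteq> x2" "z2 \<noteq> y2" using third_val[OF assms(2)] by blast
  obtain z3 where z3: "z3 \<in> {1..n3}" "z3 \<noteq> x3" "z3 \<noteq> y3" using third_val[OF assms(3)] by blast
  let ?E = "KE n1 n2 n3"
  have e1: "(x,y) \<in> ?E ^^ 1 \<longleftrightarrow> Kadj x y" using assms(4,5) by (simp add: KE_iff)
  have e0: "(x,y) \<notin> ?E ^^ 0" using assms(6) by simp
  have e2: "(x,y) \<in> ?E ^^ 2"
  proof -
    have "(x,(z1,z2,z3)) \<in> ?E" "((z1,z2,z3),y) \<in> ?E"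
      using assms(4,5) z1 z2 z3 by (auto simp: KE_iff KV_def Kadj_def x y)
    then show ?thesis by (auto simp: numeral_2_eq_2 relcomp.simps)
  qed
  show ?thesis
  proof (cases "Kadj x y")
    case True
    have "(LEAST k. (x, y) \<in> ?E ^^ k) = 1"
    proof (rule Least_equality)
      show "(x, y) \<in> ?E ^^ 1" using e1 True by simp
      fix k assume "(x, y) \<in> ?E ^^ k"
      then show "1 \<le> k" using e0 by (cases k) auto
    qed
    moreover have "\<exists>k. (x, y) \<in> ?E ^^ k" using e1 True by blast
    ultimately show ?thesis using True unfolding Kdist_def by (simp add: one_enat_def)
  next
    case False
    have "(LEAST k. (x, y) \<in> ?E ^^ k) = 2"
    proof (rule Least_equality)
      show "(x, y) \<in> ?E ^^ 2" by (rule e2)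
      fix k assume "(x, y) \<in> ?E ^^ k"
      show "2 \<le> k"
      proof (rule ccontr)
        assume "\<not> 2 \<le> k"
        then have "k = 0 \<or> k = 1" by auto
        then show False using e0 e1 False \<open>(x, y) \<in> ?E ^^ k\<close> by auto
      qed
    qed
    moreover have "\<exists>k. (x, y) \<in> ?E ^^ k" using e2 by blast
    ultimately show ?thesis using False unfolding Kdist_def by (simp add: numeral_eq_enat)
  qed
qed




locale cone =
  fixes n1 n2 n3 :: nat and B Y R :: "nat \<Rightarrow> nat"
  assumes n1: "3 \<le> n1" and n2: "3 \<le> n2" and n3: "3 \<le> n3"
  and B_rng: "c \<in> {1..n3} \<Longrightarrow> B c \<in> {1..n1}"
  and Y_rng: "c \<in> {1..n3} \<Longrightarrow> Y c \<in> {1..n2}"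
  and R_rng: "c \<in> {1..n3} \<Longrightarrow> R c \<in> {1..n2}"
  and LA: "a \<in> {1..n1} \<Longrightarrow> \<exists>c0\<in>{1..n3}. (B c0 = a \<and> Y c0 \<noteq> b \<and> c0 \<noteq> c) \<or>
              ((if B c0 = n1 then 1 else B c0 + 1) = a \<and> R c0 \<noteq> b \<and> c0 \<noteq> c)"
  and LR: "b \<in> {1..n2} \<Longrightarrow> \<exists>c0\<in>{1..n3}. (Y c0 = b \<and> B c0 \<noteq> a \<and> c0 \<noteq> c) \<or>
              (R c0 = b \<and> (if B c0 = n1 then 1 else B c0 + 1) \<noteq> a \<and> c0 \<noteq> c)"
  and YR: "c \<in> {1..n3} \<Longrightarrow> Y c \<noteq> R c"
  and LC: "c \<in> {1..n3} \<Longrightarrow> c' \<in> {1..n3} \<Longrightarrow>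
     (B c = a \<and> R c = b) \<or> ((if B c = n1 then 1 else B c + 1) = a \<and> Y c = b) \<Longrightarrow>
     (B c' = a \<and> R c' = b) \<or> ((if B c' = n1 then 1 else B c' + 1) = a \<and> Y c' = b) \<Longrightarrow> c = c'"
begin

definition sg :: "nat \<Rightarrow> nat" where "sg i = (if i = n1 then 1 else i + 1)"

definition WW :: "vtx set" where
  "WW = {(B c, Y c, c) | c. c \<in> {1..n3}} \<union> {(if B c = n1 then 1 else B c + 1, R c, c) | c. c \<in> {1..n3}}"

lemma WW_L: "c \<in> {1..n3} \<Longrightarrow> (B c, Y c, c) \<in> WW" unfolding WW_def by blast
lemma WW_R: "c \<in> {1..n3} \<Longrightarrow> (sg (B c), R c, c) \<in> WW" unfolding WW_def sg_def by blast

lemma sg_rng: "i \<in> {1..n1} \<Longrightarrow> sg i \<in> {1..n1}" using n1 by (auto simp: sg_def)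
lemma sg_neq: "sg i \<noteq> i" using n1 by (auto simp: sg_def)

lemma WW_sub: "WW \<subseteq> KV n1 n2 n3"
  using B_rng Y_rng R_rng n1 unfolding WW_def KV_def by fastforce

lemma sepA:
  assumes "a \<in> {1..n1}" "a \<noteq> a'"
  shows "\<exists>w\<in>WW. Kadj (a,b,c) w \<noteq> Kadj (a',b',c') w"
proof -
  obtain c0 where c0: "c0 \<in> {1..n3}" "(B c0 = a \<and> Y c0 \<noteq> b' \<and> c0 \<noteq> c') \<or>
              (sg (B c0) = a \<and> R c0 \<noteq> b' \<and> c0 \<noteq> c')"
    using LA[OF assms(1), of b' c'] unfolding sg_def by blast
  from c0(2) show ?thesis
  proof
    assume h: "B c0 = a \<and> Y c0 \<noteq> b' \<and> c0 \<noteq> c'"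
    show ?thesis using WW_L[OF c0(1)] h assms(2) by (intro bexI[of _ "(B c0, Y c0, c0)"]) (auto simp: Kadj_def)
  next
    assume h: "sg (B c0) = a \<and> R c0 \<noteq> b' \<and> c0 \<noteq> c'"
    show ?thesis using WW_R[OF c0(1)] h assms(2) by (intro bexI[of _ "(sg (B c0), R c0, c0)"]) (auto simp: Kadj_def)
  qed
qed

lemma sepR:
  assumes "b \<in> {1..n2}" "b \<noteq> b'"
  shows "\<exists>w\<in>WW. Kadj (a,b,c) w \<noteq> Kadj (a',b',c') w"
proof -
  obtain c0 where c0: "c0 \<in> {1..n3}" "(Y c0 = b \<and> B c0 \<noteq> a' \<and> c0 \<noteq> c') \<or>
              (R c0 = b \<and> sg (B c0) \<noteq> a' \<and> c0 \<noteq> c')"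
    using LR[OF assms(1), of a' c'] unfolding sg_def by blast
  from c0(2) show ?thesis
  proof
    assume h: "Y c0 = b \<and> B c0 \<noteq> a' \<and> c0 \<noteq> c'"
    show ?thesis using WW_L[OF c0(1)] h assms(2) by (intro bexI[of _ "(B c0, Y c0, c0)"]) (auto simp: Kadj_def)
  next
    assume h: "R c0 = b \<and> sg (B c0) \<noteq> a' \<and> c0 \<noteq> c'"
    show ?thesis using WW_R[OF c0(1)] h assms(2) by (intro bexI[of _ "(sg (B c0), R c0, c0)"]) (auto simp: Kadj_def)
  qed
qed

lemma sepC:
  assumes "c \<in> {1..n3}" "c \<noteq> c'"
  shows "(\<exists>w\<in>WW. Kadj (a,b,c) w \<noteq> Kadj (a,b,c') w) \<or>
         ((B c = a \<and> R c = b) \<or> (sg (B c) = a \<and> Y c = b))"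
proof (cases "Kadj (a,b,c') (B c, Y c, c) \<or> Kadj (a,b,c') (sg (B c), R c, c)")
  case True
  then show ?thesis
  proof
    assume "Kadj (a,b,c') (B c, Y c, c)"
    moreover have "\<not> Kadj (a,b,c) (B c, Y c, c)" by (simp add: Kadj_def)
    ultimately show ?thesis using WW_L[OF assms(1)] by blast
  next
    assume "Kadj (a,b,c') (sg (B c), R c, c)"
    moreover have "\<not> Kadj (a,b,c) (sg (B c), R c, c)" by (simp add: Kadj_def)
    ultimately show ?thesis using WW_R[OF assms(1)] by blast
  qed
next
  case False
  then have "(B c = a \<or> Y c = b) \<and> (sg (B c) = a \<or> R c = b)" using assms(2) by (auto simp: Kadj_def)
  then show ?thesis using YR[OF assms(1)] sg_neq[of "B c"] by auto
qed

lemma full_rng: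
  assumes "c \<in> {1..n3}" "(B c = a \<and> R c = b) \<or> (sg (B c) = a \<and> Y c = b)"
  shows "a \<in> {1..n1} \<and> b \<in> {1..n2}"
  using assms B_rng[OF assms(1)] R_rng[OF assms(1)] Y_rng[OF assms(1)] sg_rng[OF B_rng[OF assms(1)]] by auto

lemma core:
  assumes "a \<in> {1..n1+1}" "b \<in> {1..n2+1}" "c \<in> {1..n3+1}"
    "a' \<in> {1..n1+1}" "b' \<in> {1..n2+1}" "c' \<in> {1..n3+1}"
    "(a,b,c) \<noteq> (a',b',c')"
    "(a \<le> n1 \<and> b \<le> n2 \<and> c \<le> n3) \<longleftrightarrow> (a' \<le> n1 \<and> b' \<le> n2 \<and> c' \<le> n3)"
  shows "\<exists>w\<in>WW. Kadj (a,b,c) w \<noteq> Kadj (a',b',c') w"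
proof -
  consider "a \<noteq> a'" | "a = a'" "b \<noteq> b'" | "a = a'" "b = b'" "c \<noteq> c'" using assms(7) by auto
  then show ?thesis
  proof cases
    case 1
    show ?thesis
    proof (cases "a \<le> n1")
      case True
      then have "a \<in> {1..n1}" using assms(1) by simp
      from sepA[OF this 1] show ?thesis .
    next
      case False
      then have "a' \<in> {1..n1}" using assms(1,4) 1 by auto
      from sepA[OF this, of a b' c' b c] 1 obtain w where "w \<in> WW" "Kadj (a',b',c') w \<noteq> Kadj (a,b,c) w" by auto
      then show ?thesis by metis
    qed
  next
    case 2
    show ?thesis
    proof (cases "b \<le> n2")
      case True
      then have "b \<in> {1..n2}" using assms(2) by simp
      from sepR[OF this 2(2)] show ?thesis .
    next
      case False
      then have "b' \<in> {1..n2}" using assms(2,5) 2 by auto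
      from sepR[OF this, of b a' c' a c] 2 obtain w where "w \<in> WW" "Kadj (a',b',c') w \<noteq> Kadj (a,b,c) w" by auto
      then show ?thesis by metis
    qed
  next
    case 3
    show ?thesis
    proof (rule ccontr)
      assume nx: "\<not> ?thesis"
      have nx': "\<not> (\<exists>w\<in>WW. Kadj (a',b',c') w \<noteq> Kadj (a,b,c) w)" using nx by metis
      have fc: "(B c = a \<and> R c = b) \<or> (sg (B c) = a \<and> Y c = b)" if "c \<le> n3"
      proof -
        have "c \<in> {1..n3}" using that assms(3) by simp
        from sepC[OF this 3(3), of a b] nx 3 show ?thesis by auto
      qed
      have fc': "(B c' = a \<and> R c' = b) \<or> (sg (B c') = a \<and> Y c' = b)" if "c' \<le> n3"
      proof -
        have "c' \<in> {1..n3}" using that assms(6) by simp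
        from sepC[OF this 3(3)[symmetric], of a b] nx' 3 show ?thesis by auto
      qed
      show False
      proof (cases "c \<le> n3 \<and> c' \<le> n3")
        case True
        then have "c \<in> {1..n3}" "c' \<in> {1..n3}" using assms(3,6) by auto
        from LC[OF this, of a b] fc fc' True 3(3) show ?thesis unfolding sg_def by blast
      next
        case False
        then have "c \<le> n3 \<or> c' \<le> n3" using 3 assms(3,6) by auto
        then have "a \<le> n1 \<and> b \<le> n2"
        proof
          assume h: "c \<le> n3"
          then have "c \<in> {1..n3}" using assms(3) by simp
          from full_rng[OF this fc[OF h]] show ?thesis by simp
        next
          assume h: "c' \<le> n3"
          then have "c' \<in> {1..n3}" using assms(6) by simp
          from full_rng[OF this fc'[OF h]] show ?thesis by simp
        qed
        then show False using False assms(3,6,8) 3 by auto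
      qed
    qed
  qed
qed

lemma resolving1: "resolving n1 n2 n3 WW"
  unfolding resolving_def
proof (intro conjI WW_sub ballI impI)
  fix x y assume x: "x \<in> KV n1 n2 n3 - WW" and y: "y \<in> KV n1 n2 n3 - WW" and xy: "x \<noteq> y"
  obtain a b c where xe: "x = (a,b,c)" by (cases x) auto
  obtain a' b' c' where ye: "y = (a',b',c')" by (cases y) auto
  have xr: "a \<in> {1..n1+1}" "b \<in> {1..n2+1}" "c \<in> {1..n3+1}" "a \<le> n1" "b \<le> n2" "c \<le> n3" using x unfolding xe KV_def by auto
  have yr: "a' \<in> {1..n1+1}" "b' \<in> {1..n2+1}" "c' \<in> {1..n3+1}" "a' \<le> n1" "b' \<le> n2" "c' \<le> n3" using y unfolding ye KV_def by auto
  have ne: "(a,b,c) \<noteq> (a',b',c')" using xy xe ye by simp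
  obtain w where w: "w \<in> WW" "Kadj x w \<noteq> Kadj y w"
    using core[OF xr(1-3) yr(1-3) ne] xr yr xe ye by auto
  have wk: "w \<in> KV n1 n2 n3" using w WW_sub by auto
  have "x \<noteq> w" "y \<noteq> w" using x y w by auto
  then have "Kdist n1 n2 n3 x w = (if Kadj x w then 1 else 2)" "Kdist n1 n2 n3 y w = (if Kadj y w then 1 else 2)"
    using Kdist_eq[OF n1 n2 n3, of x w] Kdist_eq[OF n1 n2 n3, of y w] x y wk by auto
  then have "Kdist n1 n2 n3 x w \<noteq> Kdist n1 n2 n3 y w" using w(2) by auto
  then show "\<exists>w\<in>WW. Kdist n1 n2 n3 x w \<noteq> Kdist n1 n2 n3 y w" using w by blast
qed

lemma resolving2: "resolving (n1+1) (n2+1) (n3+1) (insert (n1+1,n2+1,n3+1) WW)"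
  unfolding resolving_def
proof (intro conjI ballI impI)
  let ?u = "(n1+1,n2+1,n3+1)"
  have m1: "3 \<le> n1+1" "3 \<le> n2+1" "3 \<le> n3+1" using n1 n2 n3 by auto
  have sub: "WW \<subseteq> KV (n1+1) (n2+1) (n3+1)" using WW_sub by (auto simp: KV_def)
  then show "insert ?u WW \<subseteq> KV (n1 + 1) (n2 + 1) (n3 + 1)" by (auto simp: KV_def)
  fix x y assume x: "x \<in> KV (n1+1) (n2+1) (n3+1) - insert ?u WW"
    and y: "y \<in> KV (n1+1) (n2+1) (n3+1) - insert ?u WW" and xy: "x \<noteq> y"
  obtain a b c where xe: "x = (a,b,c)" by (cases x) auto
  obtain a' b' c' where ye: "y = (a',b',c')" by (cases y) auto
  have xr: "a \<in> {1..n1+1}" "b \<in> {1..n2+1}" "c \<in> {1..n3+1}" using x unfolding xe KV_def by auto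
  have yr: "a' \<in> {1..n1+1}" "b' \<in> {1..n2+1}" "c' \<in> {1..n3+1}" using y unfolding ye KV_def by auto
  have ne: "(a,b,c) \<noteq> (a',b',c')" using xy xe ye by simp
  obtain w where w: "w \<in> insert ?u WW" "Kadj x w \<noteq> Kadj y w"
  proof (cases "(a \<le> n1 \<and> b \<le> n2 \<and> c \<le> n3) \<longleftrightarrow> (a' \<le> n1 \<and> b' \<le> n2 \<and> c' \<le> n3)")
    case True
    from core[OF xr yr ne True] obtain w where "w \<in> WW" "Kadj (a,b,c) w \<noteq> Kadj (a',b',c') w" by blast
    then show ?thesis using that[of w] xe ye by blast
  next
    case False
    have "Kadj x ?u \<longleftrightarrow> (a \<le> n1 \<and> b \<le> n2 \<and> c \<le> n3)" using xr unfolding xe Kadj_def by auto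
    moreover have "Kadj y ?u \<longleftrightarrow> (a' \<le> n1 \<and> b' \<le> n2 \<and> c' \<le> n3)" using yr unfolding ye Kadj_def by auto
    ultimately have "Kadj x ?u \<noteq> Kadj y ?u" using False by blast
    then show ?thesis using that by blast
  qed
  have wk: "w \<in> KV (n1+1) (n2+1) (n3+1)" using w(1) sub by (auto simp: KV_def)
  have "x \<noteq> w" "y \<noteq> w" using x y w(1) by auto
  then have "Kdist (n1+1) (n2+1) (n3+1) x w = (if Kadj x w then 1 else 2)" "Kdist (n1+1) (n2+1) (n3+1) y w = (if Kadj y w then 1 else 2)"
    using Kdist_eq[OF m1, of x w] Kdist_eq[OF m1, of y w] x y wk by auto
  then have "Kdist (n1+1) (n2+1) (n3+1) x w \<noteq> Kdist (n1+1) (n2+1) (n3+1) y w" using w(2) by auto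
  then show "\<exists>w\<in>insert ?u WW. Kdist (n1+1) (n2+1) (n3+1) x w \<noteq> Kdist (n1+1) (n2+1) (n3+1) y w"
    using w by blast
qed

end




lemma card_odd: "card {i \<in> {1..2*m}. odd (i::nat)} = m"
proof -
  have "{i \<in> {1..2*m}. odd (i::nat)} = (\<lambda>j. 2*j+1) ` {0..<m}"
  proof (rule set_eqI, rule iffI)
    fix i assume "i \<in> {i \<in> {1..2*m}. odd (i::nat)}"
    then obtain j where "i = 2*j+1" "j < m" by (auto elim!: oddE)
    then show "i \<in> (\<lambda>j. 2*j+1) ` {0..<m}" by auto
  qed auto
  moreover have "inj_on (\<lambda>j::nat. 2*j+1) {0..<m}" by (auto simp: inj_on_def)
  ultimately show ?thesis by (simp add: card_image)
qed

lemma discrete_step: "P (a::nat) \<Longrightarrow> \<not> P b \<Longrightarrow> a \<le> b \<Longrightarrow> \<exists>i. a \<le> i \<and> i < b \<and> P i \<and> \<not> P (Suc i)"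
proof (induction b)
  case 0 then show ?case by auto
next
  case (Suc b)
  show ?case
  proof (cases "P b")
    case True then show ?thesis using Suc by (intro exI[of _ b]) (auto simp: le_Suc_eq)
  next
    case False
    then have "a \<le> b" using Suc by (metis le_Suc_eq)
    then show ?thesis using Suc.IH[OF Suc.prems(1) False] by (auto simp: less_Suc_eq)
  qed
qed

locale MC =
  fixes n1 n2 n3 :: nat
  assumes h1: "3 \<le> n1" and h2: "3 \<le> n2" and h3: "n1 \<le> n3" and h4: "n2 \<le> n3"
    and h5: "3 * max n1 n2 \<le> 2 * n3" and h6: "2 * n3 \<le> n1 * n2"
begin

definition "qq = n3 div n1"
definition "rr = n3 mod n1"
definition "ff = (n2 - 1) div 2"
definition "hh = n2 div 2"

abbreviation "lb i \<equiv> ell n1 n3 i"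
abbreviation "LL i \<equiv> Lsum n1 n3 i"
abbreviation "bk c \<equiv> blk n1 n3 c"

lemma n3eq: "n3 = qq * n1 + rr" unfolding qq_def rr_def by simp
lemma rr_lt: "rr < n1" unfolding rr_def using h1 by simp
lemma qq_ge1: "1 \<le> qq"
proof -
  have "0 < n3 div n1" using h1 h3 by (simp add: div_greater_zero_iff)
  then show ?thesis unfolding qq_def by simp
qed

lemma ell_eq: "lb i = (if (if rr \<le> n1 - rr then i \<le> 2*rr \<and> odd i else (i \<le> 2*(n1-rr) \<longrightarrow> odd i))
   then Suc qq else qq)"
  unfolding ell_def Let_def qq_def[symmetric] rr_def[symmetric] by auto

lemma ell_bounds: "qq \<le> lb i" "lb i \<le> Suc qq" "1 \<le> lb i"
  using ell_eq[of i] qq_ge1 by (auto split: if_splits)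

lemma card_extra: "card {i \<in> {1..n1}. lb i = Suc qq} = rr"
proof (cases "rr \<le> n1 - rr")
  case True
  have "{i \<in> {1..n1}. lb i = Suc qq} = {i \<in> {1..2*rr}. odd i}"
    using True by (auto simp: ell_eq)
  then show ?thesis by (simp only: card_odd)
next
  case False
  have e: "{i \<in> {1..n1}. lb i = Suc qq} = {i \<in> {1..2*(n1-rr)}. odd i} \<union> {2*(n1-rr)<..n1}"
    using False by (auto simp: ell_eq)
  have "card ({i \<in> {1..2*(n1-rr)}. odd i} \<union> {2*(n1-rr)<..n1}) = (n1 - rr) + (n1 - 2*(n1-rr))"
    by (subst card_Un_disjoint) (auto simp only: card_odd finite_Collect_conjI finite_atLeastAtMost card_greaterThanAtMost, auto)
  then show ?thesis using e False rr_lt by simp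
qed

lemma sum_ell: "(\<Sum>i\<in>{1..n1}. lb i) = n3"
proof -
  have "(\<Sum>i\<in>{1..n1}. lb i) = (\<Sum>i\<in>{1..n1}. qq + (if lb i = Suc qq then 1 else 0))"
  proof (rule sum.cong)
    fix i have "qq \<le> lb i" "lb i \<le> Suc qq" by (rule ell_bounds)+
    then show "lb i = qq + (if lb i = Suc qq then 1 else 0)" by auto
  qed simp
  also have "\<dots> = n1 * qq + card {i \<in> {1..n1}. lb i = Suc qq}"
    by (simp add: sum.distrib sum.inter_filter[symmetric])
  also have "\<dots> = n3" using card_extra n3eq by (simp add: mult.commute)
  finally show ?thesis .
qed

lemma L1: "LL 1 = 0" by (simp add: Lsum_def)
lemma LSuc: "1 \<le> i \<Longrightarrow> LL (Suc i) = LL i + lb i"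
  by (simp add: Lsum_def sum.atLeastLessThan_Suc)
lemma Lend: "LL (Suc n1) = n3"
  using sum_ell by (simp add: Lsum_def atLeastLessThanSuc_atLeastAtMost)

lemma Lmono: assumes "1 \<le> i" "i \<le> j" shows "LL i + (j - i) \<le> LL j"
  using assms(2)
proof (induction j rule: dec_induct)
  case base then show ?case by simp
next
  case (step j)
  then show ?case using LSuc[of j] ell_bounds(3)[of j] assms(1) by (simp add: Suc_diff_le)
qed

lemma Lmono': "1 \<le> i \<Longrightarrow> i \<le> j \<Longrightarrow> LL i \<le> LL j" using Lmono by fastforce

lemma blk_unique:
  assumes "i \<in> {1..n1}" "LL i < c" "c \<le> LL i + lb i" "j \<in> {1..n1}" "LL j < c" "c \<le> LL j + lb j"
  shows "i = j"
proof (rule ccontr)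
  assume "i \<noteq> j"
  then consider "i < j" | "j < i" by linarith
  then show False
  proof cases
    case 1
    then have "LL (Suc i) \<le> LL j" using assms(1) by (intro Lmono') auto
    then show False using LSuc[of i] assms by auto
  next
    case 2
    then have "LL (Suc j) \<le> LL i" using assms(4) by (intro Lmono') auto
    then show False using LSuc[of j] assms by auto
  qed
qed

lemma blk_eq:
  assumes "i \<in> {1..n1}" "LL i < c" "c \<le> LL i + lb i"
  shows "bk c = i"
  unfolding blk_def
proof (rule the_equality)
  show "i \<in> {1..n1} \<and> LL i < c \<and> c \<le> LL i + lb i" using assms by blast
  fix j assume "j \<in> {1..n1} \<and> LL j < c \<and> c \<le> LL j + lb j"
  then show "j = i" using blk_unique[of j c i] assms by blast
qed

lemma blk_ex:
  assumes "c \<in> {1..n3}"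
  shows "\<exists>i\<in>{1..n1}. LL i < c \<and> c \<le> LL i + lb i"
proof -
  have "\<exists>i. 1 \<le> i \<and> i < Suc n1 \<and> LL i < c \<and> \<not> LL (Suc i) < c"
    by (rule discrete_step[of "\<lambda>i. LL i < c"]) (use assms L1 Lend h1 in auto)
  then obtain i where "1 \<le> i" "i < Suc n1" "LL i < c" "\<not> LL (Suc i) < c" by blast
  then show ?thesis using LSuc[of i] by (intro bexI[of _ i]) auto
qed

lemma blk_props:
  assumes "c \<in> {1..n3}"
  shows "bk c \<in> {1..n1}" "LL (bk c) < c" "c \<le> LL (bk c) + lb (bk c)"
proof -
  obtain i where i: "i \<in> {1..n1}" "LL i < c" "c \<le> LL i + lb i" using blk_ex[OF assms] by blast
  have "bk c = i" by (rule blk_eq[OF i])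
  then show "bk c \<in> {1..n1}" "LL (bk c) < c" "c \<le> LL (bk c) + lb (bk c)" using i by simp_all
qed

lemma blk_diff:
  assumes "c \<in> {1..n3}" "c' \<in> {1..n3}" "bk c = bk c'" "c < c'"
  shows "c' - c < lb (bk c)"
  using blk_props[OF assms(1)] blk_props[OF assms(2)] assms(3,4) by auto

lemma sblk_props:
  assumes "i \<in> {1..n1}"
  shows "sblk n1 n3 i \<in> {1..n3}" "bk (sblk n1 n3 i) = i"
    "2 \<le> lb i \<Longrightarrow> sblk n1 n3 i + 1 \<in> {1..n3}" "2 \<le> lb i \<Longrightarrow> bk (sblk n1 n3 i + 1) = i"
proof -
  have le: "LL (Suc i) \<le> n3" using Lmono'[of "Suc i" "Suc n1"] Lend assms by auto
  have ls: "LL (Suc i) = LL i + lb i" using LSuc[of i] assms by simp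
  have l1: "1 \<le> lb i" by (rule ell_bounds)
  show "sblk n1 n3 i \<in> {1..n3}" using le ls l1 by (simp add: sblk_def)
  show "bk (sblk n1 n3 i) = i" unfolding sblk_def by (rule blk_eq[OF assms]) (use l1 in simp_all)
  show "2 \<le> lb i \<Longrightarrow> sblk n1 n3 i + 1 \<in> {1..n3}" using le ls by (simp add: sblk_def)
  show "2 \<le> lb i \<Longrightarrow> bk (sblk n1 n3 i + 1) = i" unfolding sblk_def by (rule blk_eq[OF assms]) simp_all
qed

lemma sblk_of:
  assumes "c \<in> {1..n3}" "c = LL (bk c) + 1"
  shows "c = sblk n1 n3 (bk c)"
  using assms by (simp add: sblk_def)

lemma ell1: "2 \<le> lb 1"
proof (cases "rr = 0")
  case True
  have a: "3 * n1 \<le> 2 * n3" using h5 by simp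
  have b: "2 * n3 = (2 * qq) * n1" using True n3eq by simp
  from a b have "3 * n1 \<le> (2 * qq) * n1" by simp
  then have "3 \<le> 2 * qq" using mult_le_cancel2[of 3 n1 "2*qq"] h1 by simp
  then show ?thesis using ell_bounds(1)[of 1] by linarith
next
  case False
  then have "lb 1 = Suc qq" using rr_lt by (simp add: ell_eq)
  then show ?thesis using qq_ge1 by simp
qed

lemma blk1: "bk 1 = 1" "bk 2 = 1" "1 \<in> {1..n3}" "2 \<in> {1..n3}"
proof -
  have i1: "(1::nat) \<in> {1..n1}" using h1 by simp
  show "bk 1 = 1" by (rule blk_eq[OF i1]) (use L1 ell1 in simp_all)
  show "bk 2 = 1" by (rule blk_eq[OF i1]) (use L1 ell1 in simp_all)
  show "1 \<in> {1..n3}" "2 \<in> {1..n3}" using h1 h3 by simp_all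
qed

end



context MC begin

definition sgm :: "nat \<Rightarrow> nat" where "sgm i = (if i = n1 then 1 else i + 1)"
definition prd :: "nat \<Rightarrow> nat" where "prd i = (if i = 1 then n1 else i - 1)"

lemma sgm_rng: "i \<in> {1..n1} \<Longrightarrow> sgm i \<in> {1..n1}" using h1 unfolding sgm_def by simp
lemma sgm_inj: "i \<in> {1..n1} \<Longrightarrow> j \<in> {1..n1} \<Longrightarrow> sgm i = sgm j \<Longrightarrow> i = j"
  using h1 unfolding sgm_def by (cases "i = n1"; cases "j = n1") simp_all
lemma prd_props: "a \<in> {1..n1} \<Longrightarrow> prd a \<in> {1..n1} \<and> sgm (prd a) = a \<and> prd a \<noteq> a"
proof -
  assume a: "a \<in> {1..n1}"
  show ?thesis
  proof (cases "a = 1")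
    case True then show ?thesis using h1 unfolding sgm_def prd_def by simp
  next
    case False
    then have "prd a = a - 1" "a - 1 \<noteq> n1" "1 \<le> a - 1" using a unfolding prd_def by auto
    then show ?thesis using a unfolding sgm_def by auto
  qed
qed

lemma rr0: "rr = 0 \<Longrightarrow> lb i = qq"
proof -
  assume r: "rr = 0"
  have "\<not> (i \<le> 2*rr \<and> odd i)" using r by (cases i) auto
  then show ?thesis using r by (simp add: ell_eq)
qed

lemma extra_rr: "lb i = Suc qq \<Longrightarrow> 0 < rr"
  using rr0[of i] by (cases "rr = 0") auto

lemma qq_le: "2 * qq \<le> n2"
proof -
  have e1: "2 * n3 = 2*(qq*n1) + 2*rr" using n3eq by simp
  have e2: "(2*qq)*n1 = 2*(qq*n1)" "n2*n1 = n1*n2" by simp_all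
  have "(2*qq)*n1 \<le> n2*n1" using e1 e2 h6 by linarith
  then show ?thesis using mult_le_cancel2[of "2*qq" n1 n2] h1 by simp
qed

lemma qq_lt: assumes "0 < rr" shows "2 * qq < n2"
proof -
  have e1: "2 * n3 = 2*(qq*n1) + 2*rr" using n3eq by simp
  have e2: "(2*qq)*n1 = 2*(qq*n1)" "n2*n1 = n1*n2" by simp_all
  have "(2*qq)*n1 < n2*n1" using e1 e2 h6 assms by linarith
  then show ?thesis using mult_less_cancel2[of "2*qq" n1 n2] by simp
qed

lemma ell_le_even: assumes "even n2" shows "lb i \<le> hh"
proof -
  have n2: "n2 = 2 * hh" using assms unfolding hh_def by simp
  show ?thesis
  proof (cases "lb i = Suc qq")
    case True
    then have "2 * qq < 2 * hh" using qq_lt[OF extra_rr[OF True]] n2 by simp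
    then have "qq < hh" by simp
    then show ?thesis using True by simp
  next
    case False
    then have "lb i = qq" using ell_bounds(1,2)[of i] by linarith
    then show ?thesis using qq_le n2 by simp
  qed
qed

lemma n2_odd: "odd n2 \<Longrightarrow> n2 = 2 * ff + 1" unfolding ff_def by presburger
lemma ff_ge1: "odd n2 \<Longrightarrow> 1 \<le> ff" using h2 n2_odd by linarith

lemma qq_le_ff: "odd n2 \<Longrightarrow> qq \<le> ff" using qq_le n2_odd by linarith

lemma ell_le_odd: "odd n2 \<Longrightarrow> lb i \<le> Suc ff"
  using ell_bounds(2)[of i] qq_le_ff by linarith

lemma long:
  assumes "odd n2" "ff < lb i"
  shows "qq = ff \<and> lb i = Suc qq \<and> 2*rr \<le> n1 \<and> odd i \<and> i \<le> 2*rr"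
proof -
  have q: "qq = ff" "lb i = Suc qq" using ell_bounds(2)[of i] qq_le_ff[OF assms(1)] assms(2) by linarith+
  then have "0 < rr" using extra_rr by blast
  have e1: "2 * n3 = 2*(ff*n1) + 2*rr" using n3eq q(1) by simp
  have e2: "n1 * n2 = 2*(ff*n1) + n1" by (subst n2_odd[OF assms(1)]) (simp add: algebra_simps)
  have r: "2*rr \<le> n1" using e1 e2 h6 by linarith
  then have rr: "rr \<le> n1 - rr" by linarith
  have "lb i = (if i \<le> 2*rr \<and> odd i then Suc qq else qq)" using rr by (simp add: ell_eq)
  then have "i \<le> 2*rr \<and> odd i" using q(2) by (metis n_not_Suc_n)
  then show ?thesis using q r by blast
qed

lemma long1:
  assumes "odd n2" "ff < lb i"
  shows "ff < lb 1"
proof -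
  have L: "qq = ff" "2*rr \<le> n1" "0 < rr" using long[OF assms] extra_rr by blast+
  then have "lb 1 = Suc qq" by (simp add: ell_eq)
  then show ?thesis using L by simp
qed

lemma nonadj:
  assumes "odd n2" "i \<in> {1..n1}" "j \<in> {1..n1}" "ff < lb i" "ff < lb j"
  shows "j \<noteq> sgm i"
proof
  assume j: "j = sgm i"
  have A: "odd i" "i \<le> 2*rr" "odd j" "2*rr \<le> n1" using long[OF assms(1,4)] long[OF assms(1,5)] by blast+
  show False
  proof (cases "i = n1")
    case True
    then show ?thesis using A by presburger
  next
    case False
    then have "j = i + 1" using j by (simp add: sgm_def)
    then show ?thesis using A by simp
  qed
qed

abbreviation "kk \<equiv> kcnt n1 n2 n3"

lemma kcnt_def': "kk = card {i \<in> {1..n1}. ff < lb i}"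
  unfolding kcnt_def ff_def by simp

lemma long_k1:
  assumes "odd n2" "kk < 2" "i \<in> {1..n1}" "ff < lb i"
  shows "i = 1"
proof (rule ccontr)
  assume "i \<noteq> 1"
  have "{1, i} \<subseteq> {i \<in> {1..n1}. ff < lb i}" using assms(3) long1[OF assms(1,4)] assms(4) h1 by simp
  then have "card {1, i} \<le> kk" unfolding kcnt_def' by (intro card_mono) auto
  then show False using \<open>i \<noteq> 1\<close> assms(2) by simp
qed

lemma kcnt_bound:
  assumes "odd n2" "2 \<le> kk"
  shows "3 * ff + kk \<le> n3"
proof -
  have "{i \<in> {1..n1}. ff < lb i} \<noteq> {}"
  proof
    assume "{i \<in> {1..n1}. ff < lb i} = {}"
    then have "kk = 0" unfolding kcnt_def' by simp
    then show False using assms(2) by simp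
  qed
  then obtain i where "ff < lb i" by blast
  then have q: "qq = ff" using long[OF assms(1)] by blast
  have "{i \<in> {1..n1}. ff < lb i} = {i \<in> {1..n1}. lb i = Suc qq}"
  proof (rule Collect_cong)
    fix i have "qq \<le> lb i" "lb i \<le> Suc qq" by (rule ell_bounds)+
    then show "(i \<in> {1..n1} \<and> ff < lb i) = (i \<in> {1..n1} \<and> lb i = Suc qq)" using q by linarith
  qed
  then have "kk = rr" using card_extra unfolding kcnt_def' by simp
  moreover have "3 * ff \<le> qq * n1" using q h1 by simp
  ultimately show ?thesis using n3eq by simp
qed

lemma pair:
  assumes "a \<in> {1..n1}"
  shows "3 \<le> lb a + lb (prd a)"
proof (cases "2 \<le> qq")
  case True
  then show ?thesis using ell_bounds(1)[of a] ell_bounds(1)[of "prd a"] by linarith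
next
  case False
  then have q1: "qq = 1" using qq_ge1 by linarith
  have "3 * n1 \<le> 2 * n3" using h5 by simp
  then have r: "n1 \<le> 2 * rr" using n3eq q1 by simp
  have a1: "1 \<le> a" "a \<le> n1" using assms by auto
  have pa: "a \<noteq> 1 \<Longrightarrow> prd a = a - 1" unfolding prd_def by simp
  have oa: "\<not> odd a \<Longrightarrow> a \<noteq> 1 \<and> odd (a - 1)" using a1 by (cases a) (auto simp: odd_pos)
  have "lb a = Suc qq \<or> lb (prd a) = Suc qq"
  proof (cases "rr \<le> n1 - rr")
    case True
    then have r2: "n1 = 2 * rr" using r by linarith
    have e: "lb j = (if j \<le> 2*rr \<and> odd j then Suc qq else qq)" for j using True by (simp add: ell_eq)
    show ?thesis
    proof (cases "odd a")
      case True then show ?thesis using r2 a1 e[of a] by simp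
    next
      case False
      have "a - 1 \<le> n1" using a1 by simp
      then show ?thesis using False r2 a1 e[of "a - 1"] oa pa by simp
    qed
  next
    case False
    have e: "lb j = (if j \<le> 2*(n1-rr) \<longrightarrow> odd j then Suc qq else qq)" for j using False by (simp add: ell_eq)
    show ?thesis
    proof (cases "odd a \<or> 2 * (n1 - rr) < a")
      case True then show ?thesis using e[of a] by auto
    next
      case F2: False
      then show ?thesis using e[of "a - 1"] oa pa by simp
    qed
  qed
  then show ?thesis using ell_bounds(1)[of a] ell_bounds(1)[of "prd a"] q1 by linarith
qed

end

lemma rk0: "rank_out A 0 = 0" by (simp add: rank_out_def)

lemma rkSuc: "rank_out A (Suc c) = rank_out A c + (if Suc c \<in> A then 0 else 1)"
proof -
  have "{c' \<in> {1..Suc c}. c' \<notin> A} = (if Suc c \<in> A then {c' \<in> {1..c}. c' \<notin> A} else insert (Suc c) {c' \<in> {1..c}. c' \<notin> A})"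
    by (auto simp: le_Suc_eq)
  then show ?thesis by (simp add: rank_out_def)
qed

lemma rk_mono: "c \<le> c' \<Longrightarrow> rank_out A c \<le> rank_out A c' \<and> rank_out A c' \<le> rank_out A c + (c' - c)"
proof (induction c' rule: dec_induct)
  case base then show ?case by simp
next
  case (step n) then show ?case by (simp add: rkSuc Suc_diff_le)
qed

lemma rk_strict: "c < c' \<Longrightarrow> c' \<notin> A \<Longrightarrow> rank_out A c < rank_out A c'"
proof -
  assume a: "c < c'" "c' \<notin> A"
  obtain d where d: "c' = Suc d" using a by (cases c') auto
  have "rank_out A c \<le> rank_out A d" using rk_mono[of c d A] a d by auto
  then show ?thesis using a d by (simp add: rkSuc)
qed

lemma rk_skip: "c < d \<Longrightarrow> d \<le> c' \<Longrightarrow> d \<in> A \<Longrightarrow> rank_out A c' + 1 \<le> rank_out A c + (c' - c)"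
proof -
  assume a: "c < d" "d \<le> c'" "d \<in> A"
  obtain e where e: "d = Suc e" using a by (cases d) auto
  have 1: "rank_out A e \<le> rank_out A c + (e - c)" using rk_mono[of c e A] a e by auto
  have 2: "rank_out A c' \<le> rank_out A d + (c' - d)" using rk_mono[of d c' A] a by auto
  have 3: "rank_out A d = rank_out A e" using a e by (simp add: rkSuc)
  show ?thesis using 1 2 3 a e by linarith
qed

lemma rk_surj: "1 \<le> t \<Longrightarrow> t \<le> rank_out A n \<Longrightarrow> \<exists>c\<in>{1..n}. c \<notin> A \<and> rank_out A c = t"
proof (induction n)
  case 0 then show ?case by (simp add: rk0)
next
  case (Suc n)
  show ?case
  proof (cases "t \<le> rank_out A n")
    case True then show ?thesis using Suc by fastforce
  next
    case False
    then have "Suc n \<notin> A" "rank_out A (Suc n) = t" using Suc.prems by (auto simp: rkSuc split: if_splits)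
    then show ?thesis by auto
  qed
qed

lemma rk_total: "finite A \<Longrightarrow> n - card A \<le> rank_out A n"
proof -
  assume f: "finite A"
  have "{c' \<in> {1..n}. c' \<notin> A} = {1..n} - A" by auto
  moreover have "card {1..n} - card A \<le> card ({1..n} - A)" using diff_card_le_card_Diff[OF f] by blast
  ultimately show ?thesis by (simp add: rank_out_def)
qed

lemma rk_pos: "1 \<le> c \<Longrightarrow> c \<notin> A \<Longrightarrow> 1 \<le> rank_out A c"
  using rk_strict[of "c - 1" c A] by simp

lemma mod_dist:
  assumes "1 \<le> (t1::nat)" "t1 < t2" "t2 - t1 < f"
  shows "(t1 - 1) mod f \<noteq> (t2 - 1) mod f"
proof
  assume "(t1 - 1) mod f = (t2 - 1) mod f"
  then have "f dvd (t2 - 1) - (t1 - 1)" using mod_eq_dvd_iff_nat[of "t1 - 1" "t2 - 1" f] assms by simp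
  moreover have "(t2 - 1) - (t1 - 1) = t2 - t1" "0 < t2 - t1" using assms by auto
  ultimately show False using assms(3) by (metis dvd_imp_le not_less)
qed




context MC begin

lemma cone_of:
  fixes Y R :: "nat \<Rightarrow> nat"
  assumes Yr: "\<And>c. c \<in> {1..n3} \<Longrightarrow> Y c \<in> {1..n2}"
    and Rr: "\<And>c. c \<in> {1..n3} \<Longrightarrow> R c \<in> {1..n2}"
    and Yd: "\<And>c c'. c \<in> {1..n3} \<Longrightarrow> c' \<in> {1..n3} \<Longrightarrow> bk c = bk c' \<Longrightarrow> Y c = Y c' \<Longrightarrow> c = c'"
    and Rd: "\<And>c c'. c \<in> {1..n3} \<Longrightarrow> c' \<in> {1..n3} \<Longrightarrow> bk c = bk c' \<Longrightarrow> R c = R c' \<Longrightarrow> c = c'"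
    and YR: "\<And>c. c \<in> {1..n3} \<Longrightarrow> Y c \<noteq> R c"
    and R5a: "\<And>c c'. c \<in> {1..n3} \<Longrightarrow> c' \<in> {1..n3} \<Longrightarrow> Y c = R c' \<Longrightarrow> bk c \<noteq> sgm (bk c')"
    and R5b: "\<And>c c'. c \<in> {1..n3} \<Longrightarrow> c' \<in> {1..n3} \<Longrightarrow> Y c = R c' \<Longrightarrow> bk c' \<noteq> sgm (bk c)"
    and LR: "\<And>b a c. b \<in> {1..n2} \<Longrightarrow> \<exists>c0\<in>{1..n3}. (Y c0 = b \<and> bk c0 \<noteq> a \<and> c0 \<noteq> c) \<or> (R c0 = b \<and> sgm (bk c0) \<noteq> a \<and> c0 \<noteq> c)"
  shows "cone n1 n2 n3 bk Y R"
proof (unfold_locales, unfold sgm_def[symmetric])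
  show "3 \<le> n1" "3 \<le> n2" "3 \<le> n3" using h1 h2 h3 by auto
  show "\<And>c. c \<in> {1..n3} \<Longrightarrow> bk c \<in> {1..n1}" using blk_props(1) by blast
  show "\<And>c. c \<in> {1..n3} \<Longrightarrow> Y c \<in> {1..n2}" by (rule Yr)
  show "\<And>c. c \<in> {1..n3} \<Longrightarrow> R c \<in> {1..n2}" by (rule Rr)
  show "\<And>c. c \<in> {1..n3} \<Longrightarrow> Y c \<noteq> R c" by (rule YR)
  show "\<And>b a c. b \<in> {1..n2} \<Longrightarrow> \<exists>c0\<in>{1..n3}. (Y c0 = b \<and> bk c0 \<noteq> a \<and> c0 \<noteq> c) \<or> (R c0 = b \<and> sgm (bk c0) \<noteq> a \<and> c0 \<noteq> c)"
    by (rule LR)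
next
  fix a b c
  assume a: "a \<in> {1..n1}"
  define p where "p = prd a"
  have pp: "p \<in> {1..n1} \<and> sgm p = a \<and> p \<noteq> a" using prd_props[OF a] unfolding p_def .
  have p: "p \<in> {1..n1}" "sgm p = a" "p \<noteq> a" using pp by blast+
  have pr: "3 \<le> lb a + lb p" using pair[OF a] unfolding p_def .
  show "\<exists>c0\<in>{1..n3}. (bk c0 = a \<and> Y c0 \<noteq> b \<and> c0 \<noteq> c) \<or> (sgm (bk c0) = a \<and> R c0 \<noteq> b \<and> c0 \<noteq> c)"
  proof (cases "2 \<le> lb a")
    case True
    define u1 where "u1 = sblk n1 n3 a"
    define u2 where "u2 = sblk n1 n3 a + 1"
    define v where "v = sblk n1 n3 p"
    have cu1: "u1 \<in> {1..n3}" "bk u1 = a" using sblk_props(1,2)[OF a] unfolding u1_def .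
    have cu2: "u2 \<in> {1..n3}" "bk u2 = a" using sblk_props(3,4)[OF a True] unfolding u2_def .
    have cv: "v \<in> {1..n3}" "bk v = p" using sblk_props(1,2)[OF p(1)] unfolding v_def .
    have d1: "u1 \<noteq> u2" unfolding u1_def u2_def by simp
    have d2: "u1 \<noteq> v" using cu1(2) cv(2) p(3) by metis
    have d3: "u2 \<noteq> v" using cu2(2) cv(2) p(3) by metis
    have yd: "Y u1 \<noteq> Y u2" using Yd[OF cu1(1) cu2(1)] cu1(2) cu2(2) d1 by metis
    have x1: "\<not> (Y u1 = b \<and> R v = b)" using R5a[OF cu1(1) cv(1)] cu1(2) cv(2) p(2) by metis
    have x2: "\<not> (Y u2 = b \<and> R v = b)" using R5a[OF cu2(1) cv(1)] cu2(2) cv(2) p(2) by metis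
    show ?thesis
    proof (cases "Y u1 \<noteq> b \<and> u1 \<noteq> c")
      case True then show ?thesis using cu1 by blast
    next
      case F1: False
      show ?thesis
      proof (cases "Y u2 \<noteq> b \<and> u2 \<noteq> c")
        case True then show ?thesis using cu2 by blast
      next
        case F2: False
        have "Y u1 = b \<or> Y u2 = b" using F1 F2 d1 by blast
        then have "R v \<noteq> b" using x1 x2 by blast
        moreover have "v \<noteq> c"
        proof
          assume "v = c"
          then have "Y u1 = b" "Y u2 = b" using F1 F2 d2 d3 by blast+
          then show False using yd by simp
        qed
        ultimately show ?thesis using cv p(2) by blast
      qed
    qed
  next
    case False
    then have T: "2 \<le> lb p" using pr by linarith
    define u where "u = sblk n1 n3 a"
    define v1 where "v1 = sblk n1 n3 p"
    define v2 where "v2 = sblk n1 n3 p + 1"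
    have cu: "u \<in> {1..n3}" "bk u = a" using sblk_props(1,2)[OF a] unfolding u_def .
    have cv1: "v1 \<in> {1..n3}" "bk v1 = p" using sblk_props(1,2)[OF p(1)] unfolding v1_def .
    have cv2: "v2 \<in> {1..n3}" "bk v2 = p" using sblk_props(3,4)[OF p(1) T] unfolding v2_def .
    have d1: "v1 \<noteq> v2" unfolding v1_def v2_def by simp
    have d2: "u \<noteq> v1" using cu(2) cv1(2) p(3) by metis
    have d3: "u \<noteq> v2" using cu(2) cv2(2) p(3) by metis
    have rd: "R v1 \<noteq> R v2" using Rd[OF cv1(1) cv2(1)] cv1(2) cv2(2) d1 by metis
    have x1: "\<not> (Y u = b \<and> R v1 = b)" using R5a[OF cu(1) cv1(1)] cu(2) cv1(2) p(2) by metis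
    have x2: "\<not> (Y u = b \<and> R v2 = b)" using R5a[OF cu(1) cv2(1)] cu(2) cv2(2) p(2) by metis
    show ?thesis
    proof (cases "R v1 \<noteq> b \<and> v1 \<noteq> c")
      case True then show ?thesis using cv1 p(2) by blast
    next
      case F1: False
      show ?thesis
      proof (cases "R v2 \<noteq> b \<and> v2 \<noteq> c")
        case True then show ?thesis using cv2 p(2) by blast
      next
        case F2: False
        have "R v1 = b \<or> R v2 = b" using F1 F2 d1 by blast
        then have "Y u \<noteq> b" using x1 x2 by blast
        moreover have "u \<noteq> c"
        proof
          assume "u = c"
          then have "R v1 = b" "R v2 = b" using F1 F2 d2 d3 by blast+
          then show False using rd by simp
        qed
        ultimately show ?thesis using cu by blast
      qed
    qed
  qed
next
  fix c c' a b
  assume c: "c \<in> {1..n3}" and c': "c' \<in> {1..n3}"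
    and f: "bk c = a \<and> R c = b \<or> sgm (bk c) = a \<and> Y c = b"
    and f': "bk c' = a \<and> R c' = b \<or> sgm (bk c') = a \<and> Y c' = b"
  have bc: "bk c \<in> {1..n1}" "bk c' \<in> {1..n1}" using blk_props(1) c c' by auto
  from f show "c = c'"
  proof
    assume h: "bk c = a \<and> R c = b"
    from f' show ?thesis
    proof
      assume h': "bk c' = a \<and> R c' = b"
      then show ?thesis using Rd[OF c c'] h by auto
    next
      assume h': "sgm (bk c') = a \<and> Y c' = b"
      then show ?thesis using R5b[OF c' c] h by auto
    qed
  next
    assume h: "sgm (bk c) = a \<and> Y c = b"
    from f' show ?thesis
    proof
      assume h': "bk c' = a \<and> R c' = b"
      then show ?thesis using R5b[OF c c'] h by auto
    next
      assume h': "sgm (bk c') = a \<and> Y c' = b"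
      then have "bk c = bk c'" using sgm_inj[OF bc] h by auto
      then show ?thesis using Yd[OF c c'] h h' by auto
    qed
  qed
qed

lemma pick3_gen:
  assumes "y1 \<noteq> y2" "y1 \<noteq> y3" "y2 \<noteq> y3" "x1 \<noteq> x2" "x1 \<noteq> x3" "x2 \<noteq> x3"
  shows "(y1 \<noteq> a \<and> x1 \<noteq> c) \<or> (y2 \<noteq> a \<and> x2 \<noteq> c) \<or> (y3 \<noteq> a \<and> x3 \<noteq> c)"
  using assms by (cases "x1 = c"; cases "x2 = c"; cases "x3 = c") auto

lemma pick4_gen:
  assumes "y1 \<noteq> y2" "z1 \<noteq> z2" "x1 \<noteq> x2" "x1 \<noteq> x3" "x1 \<noteq> x4" "x2 \<noteq> x3" "x2 \<noteq> x4" "x3 \<noteq> x4"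
  shows "(y1 \<noteq> a \<and> x1 \<noteq> c) \<or> (y2 \<noteq> a \<and> x2 \<noteq> c) \<or> (z1 \<noteq> a \<and> x3 \<noteq> c) \<or> (z2 \<noteq> a \<and> x4 \<noteq> c)"
  using assms by (cases "x1 = c"; cases "x2 = c"; cases "x3 = c"; cases "x4 = c") auto

lemma pickL3:
  assumes Yd: "\<And>c c'. c \<in> {1..n3} \<Longrightarrow> c' \<in> {1..n3} \<Longrightarrow> bk c = bk c' \<Longrightarrow> Y c = Y c' \<Longrightarrow> c = c'"
    and u: "u1 \<in> {1..n3}" "u2 \<in> {1..n3}" "u3 \<in> {1..n3}" "u1 \<noteq> u2" "u1 \<noteq> u3" "u2 \<noteq> u3"
    "Y u1 = b" "Y u2 = b" "Y u3 = b"
  shows "\<exists>c0\<in>{1..n3}. (Y c0 = b \<and> bk c0 \<noteq> a \<and> c0 \<noteq> c) \<or> (R c0 = b \<and> sgm (bk c0) \<noteq> a \<and> c0 \<noteq> c)"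
proof -
  have "bk u1 \<noteq> bk u2" "bk u1 \<noteq> bk u3" "bk u2 \<noteq> bk u3" using Yd u by metis+
  then have "(bk u1 \<noteq> a \<and> u1 \<noteq> c) \<or> (bk u2 \<noteq> a \<and> u2 \<noteq> c) \<or> (bk u3 \<noteq> a \<and> u3 \<noteq> c)" using u(4-6) by (intro pick3_gen)
  then show ?thesis using u by blast
qed

lemma pickR3:
  assumes Rd: "\<And>c c'. c \<in> {1..n3} \<Longrightarrow> c' \<in> {1..n3} \<Longrightarrow> bk c = bk c' \<Longrightarrow> R c = R c' \<Longrightarrow> c = c'"
    and u: "u1 \<in> {1..n3}" "u2 \<in> {1..n3}" "u3 \<in> {1..n3}" "u1 \<noteq> u2" "u1 \<noteq> u3" "u2 \<noteq> u3"
    "R u1 = b" "R u2 = b" "R u3 = b"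
  shows "\<exists>c0\<in>{1..n3}. (Y c0 = b \<and> bk c0 \<noteq> a \<and> c0 \<noteq> c) \<or> (R c0 = b \<and> sgm (bk c0) \<noteq> a \<and> c0 \<noteq> c)"
proof -
  have "bk u1 \<noteq> bk u2" "bk u1 \<noteq> bk u3" "bk u2 \<noteq> bk u3" using Rd u by metis+
  moreover have "bk u1 \<in> {1..n1}" "bk u2 \<in> {1..n1}" "bk u3 \<in> {1..n1}" using blk_props(1) u by auto
  ultimately have "sgm (bk u1) \<noteq> sgm (bk u2)" "sgm (bk u1) \<noteq> sgm (bk u3)" "sgm (bk u2) \<noteq> sgm (bk u3)"
    using sgm_inj by metis+
  then have "(sgm (bk u1) \<noteq> a \<and> u1 \<noteq> c) \<or> (sgm (bk u2) \<noteq> a \<and> u2 \<noteq> c) \<or> (sgm (bk u3) \<noteq> a \<and> u3 \<noteq> c)" using u(4-6) by (intro pick3_gen)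
  then show ?thesis using u by blast
qed

lemma pick22:
  assumes Yd: "\<And>c c'. c \<in> {1..n3} \<Longrightarrow> c' \<in> {1..n3} \<Longrightarrow> bk c = bk c' \<Longrightarrow> Y c = Y c' \<Longrightarrow> c = c'"
    and Rd: "\<And>c c'. c \<in> {1..n3} \<Longrightarrow> c' \<in> {1..n3} \<Longrightarrow> bk c = bk c' \<Longrightarrow> R c = R c' \<Longrightarrow> c = c'"
    and u: "u1 \<in> {1..n3}" "u2 \<in> {1..n3}" "v1 \<in> {1..n3}" "v2 \<in> {1..n3}"
      "u1 \<noteq> u2" "v1 \<noteq> v2" "u1 \<noteq> v1" "u1 \<noteq> v2" "u2 \<noteq> v1" "u2 \<noteq> v2"
      "Y u1 = b" "Y u2 = b" "R v1 = b" "R v2 = b"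
  shows "\<exists>c0\<in>{1..n3}. (Y c0 = b \<and> bk c0 \<noteq> a \<and> c0 \<noteq> c) \<or> (R c0 = b \<and> sgm (bk c0) \<noteq> a \<and> c0 \<noteq> c)"
proof -
  have "bk u1 \<noteq> bk u2" using Yd u by metis
  have "bk v1 \<noteq> bk v2" using Rd u by metis
  moreover have "bk v1 \<in> {1..n1}" "bk v2 \<in> {1..n1}" using blk_props(1) u by auto
  ultimately have "sgm (bk v1) \<noteq> sgm (bk v2)" using sgm_inj by metis
  then have "(bk u1 \<noteq> a \<and> u1 \<noteq> c) \<or> (bk u2 \<noteq> a \<and> u2 \<noteq> c) \<or> (sgm (bk v1) \<noteq> a \<and> v1 \<noteq> c) \<or> (sgm (bk v2) \<noteq> a \<and> v2 \<noteq> c)"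
    using u(5-10) \<open>bk u1 \<noteq> bk u2\<close> by (intro pick4_gen)
  then show ?thesis using u by blast
qed

lemma pick21:
  assumes u: "u1 \<in> {1..n3}" "u2 \<in> {1..n3}" "v \<in> {1..n3}"
      "u1 \<noteq> u2" "u1 \<noteq> v" "u2 \<noteq> v"
      "bk u1 \<noteq> bk u2" "bk u1 \<noteq> sgm (bk v)" "bk u2 \<noteq> sgm (bk v)"
      "Y u1 = b" "Y u2 = b" "R v = b"
  shows "\<exists>c0\<in>{1..n3}. (Y c0 = b \<and> bk c0 \<noteq> a \<and> c0 \<noteq> c) \<or> (R c0 = b \<and> sgm (bk c0) \<noteq> a \<and> c0 \<noteq> c)"
proof -
  have "(bk u1 \<noteq> a \<and> u1 \<noteq> c) \<or> (bk u2 \<noteq> a \<and> u2 \<noteq> c) \<or> (sgm (bk v) \<noteq> a \<and> v \<noteq> c)"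
    using u(4-9) by (intro pick3_gen)
  then show ?thesis using u by blast
qed

end



lemma mod_col: "1 \<le> (b::nat) \<Longrightarrow> b \<le> h \<Longrightarrow> (b + k * h - 1) mod h = b - 1"
proof -
  assume a: "1 \<le> b" "b \<le> h"
  have e: "b + k * h - 1 = (b - 1) + k * h" using a by simp
  have "((b - 1) + k * h) mod h = (b - 1) mod h" by (rule mod_mult_self1)
  also have "\<dots> = b - 1" using a by simp
  finally show ?thesis using e by simp
qed

context MC begin

lemma even_case:
  assumes ev: "even n2"
  shows "cone n1 n2 n3 bk (yL n1 n2 n3) (yR n1 n2 n3)"
proof -
  let ?Y = "yL n1 n2 n3" and ?R = "yR n1 n2 n3"
  have hh2: "2 \<le> hh" "n2 = 2 * hh" using h2 ev unfolding hh_def by auto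
  have Ye: "?Y c = (c - 1) mod hh + 1" for c using ev unfolding yL_def hh_def by simp
  have Re: "?R c = hh + (c - 1) mod hh + 1" for c using ev unfolding yR_def hh_def by simp
  have ml: "(c - 1) mod hh < hh" for c using hh2 by simp
  have Ylt: "?Y c \<le> hh" for c using Ye[of c] ml[of c] by linarith
  have Rgt: "hh < ?R c" for c using Re[of c] by simp
  have Rle: "?R c \<le> n2" for c using Re[of c] ml[of c] hh2 by linarith
  have dist: "(c - 1) mod hh \<noteq> (c' - 1) mod hh" if "c \<in> {1..n3}" "c' \<in> {1..n3}" "bk c = bk c'" "c \<noteq> c'" for c c'
  proof -
    have D: "(c - 1) mod hh \<noteq> (c' - 1) mod hh" if "c < c'" "bk c = bk c'" "c \<in> {1..n3}" "c' \<in> {1..n3}" for c c'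
    proof -
      have "c' - c < hh" using blk_diff[OF that(3,4,2,1)] ell_le_even[OF ev, of "bk c"] by linarith
      moreover have "1 \<le> c" using that(3) by simp
      ultimately show ?thesis using mod_dist[of c c' hh] that(1) by blast
    qed
    show ?thesis
    proof (cases "c < c'")
      case True then show ?thesis using D that by blast
    next
      case False
      then have "c' < c" using that(4) by linarith
      then show ?thesis using D[of c' c] that by metis
    qed
  qed
  have Yd: "c = c'" if "c \<in> {1..n3}" "c' \<in> {1..n3}" "bk c = bk c'" "?Y c = ?Y c'" for c c'
  proof (rule ccontr)
    assume "c \<noteq> c'"
    then have "(c - 1) mod hh \<noteq> (c' - 1) mod hh" using dist that(1-3) by blast
    then show False using that(4) Ye[of c] Ye[of c'] by simp
  qed
  have Rd: "c = c'" if "c \<in> {1..n3}" "c' \<in> {1..n3}" "bk c = bk c'" "?R c = ?R c'" for c c'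
  proof (rule ccontr)
    assume "c \<noteq> c'"
    then have "(c - 1) mod hh \<noteq> (c' - 1) mod hh" using dist that(1-3) by blast
    then show False using that(4) Re[of c] Re[of c'] by simp
  qed
  show ?thesis
  proof (rule cone_of)
    fix c assume "c \<in> {1..n3}"
    show "?Y c \<in> {1..n2}" using Ye[of c] Ylt[of c] hh2 by simp
    show "?R c \<in> {1..n2}" using Re[of c] Rle[of c] by simp
    show "?Y c \<noteq> ?R c" using Ylt[of c] Rgt[of c] by simp
  next
    fix c c' assume "c \<in> {1..n3}" "c' \<in> {1..n3}" "bk c = bk c'"
    then show "?Y c = ?Y c' \<Longrightarrow> c = c'" "?R c = ?R c' \<Longrightarrow> c = c'"
      using Yd[of c c'] Rd[of c c'] by blast+
  next
    fix c c' assume "c \<in> {1..n3}" "c' \<in> {1..n3}" "?Y c = ?R c'"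
    then show "bk c \<noteq> sgm (bk c')" "bk c' \<noteq> sgm (bk c)" using Ylt[of c] Rgt[of c'] by simp_all
  next
    fix b a c assume b: "b \<in> {1..n2}"
    have n3h: "3 * hh \<le> n3" using h5 hh2 by simp
    show "\<exists>c0\<in>{1..n3}. (?Y c0 = b \<and> bk c0 \<noteq> a \<and> c0 \<noteq> c) \<or> (?R c0 = b \<and> sgm (bk c0) \<noteq> a \<and> c0 \<noteq> c)"
    proof (cases "b \<le> hh")
      case True
      have b1: "1 \<le> b" using b by simp
      have Yv: "?Y (b + k * hh) = b" for k using Ye[of "b + k * hh"] mod_col[OF b1 True, of k] b1 by simp
      have r: "b \<in> {1..n3}" "b + hh \<in> {1..n3}" "b + 2 * hh \<in> {1..n3}" using b1 True n3h by auto
      have y: "?Y b = b" "?Y (b + hh) = b" "?Y (b + 2 * hh) = b" using Yv[of 0] Yv[of 1] Yv[of 2] by simp_all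
      have d: "b \<noteq> b + hh" "b \<noteq> b + 2 * hh" "b + hh \<noteq> b + 2 * hh" using hh2 by simp_all
      show ?thesis by (rule pickL3[OF Yd r d y]) blast+
    next
      case False
      define v where "v = b - hh"
      have v: "1 \<le> v" "v \<le> hh" "b = hh + v" using False b hh2 unfolding v_def by auto
      have Rv: "?R (v + k * hh) = b" for k using Re[of "v + k * hh"] mod_col[OF v(1,2), of k] v by simp
      have r: "v \<in> {1..n3}" "v + hh \<in> {1..n3}" "v + 2 * hh \<in> {1..n3}" using v n3h by auto
      have y: "?R v = b" "?R (v + hh) = b" "?R (v + 2 * hh) = b" using Rv[of 0] Rv[of 1] Rv[of 2] by simp_all
      have d: "v \<noteq> v + hh" "v \<noteq> v + 2 * hh" "v + hh \<noteq> v + 2 * hh" using hh2 by simp_all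
      show ?thesis by (rule pickR3[OF Rd r d y]) blast+
    qed
  qed
qed

end



lemma card2_obtain: "2 \<le> card A \<Longrightarrow> \<exists>x y. x \<in> A \<and> y \<in> A \<and> x \<noteq> y"
proof -
  assume c: "2 \<le> card A"
  then have "A \<noteq> {}" by auto
  then obtain x where x: "x \<in> A" by blast
  have f: "finite A" using c by (metis card.infinite not_numeral_le_zero)
  have "card (A - {x}) = card A - 1" using card_Diff_singleton[OF x] .
  then have "card (A - {x}) \<ge> 1" using c by linarith
  then have "A - {x} \<noteq> {}" by (intro notI) simp
  then obtain y where "y \<in> A - {x}" by blast
  then show ?thesis using x by blast
qed

context MC begin

abbreviation "SS \<equiv> Sset n1 n2 n3"
abbreviation "S1 \<equiv> (\<lambda>s. s + 1) ` SS"

lemma S_k2: "2 \<le> kk \<Longrightarrow> SS = sblk n1 n3 ` {i \<in> {1..n1}. ff < lb i}"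
  unfolding Sset_def ff_def by auto

lemma S_k1: "\<not> 2 \<le> kk \<Longrightarrow> SS = {1}"
  unfolding Sset_def by simp

lemma S_fin: "finite SS"
  by (cases "2 \<le> kk") (simp_all add: S_k2 S_k1)

lemma sblk1: "sblk n1 n3 1 = 1" unfolding sblk_def using L1 by simp

lemma longS:
  assumes od: "odd n2" and i: "i \<in> {1..n1}" and l: "ff < lb i"
  shows "sblk n1 n3 i \<in> SS"
proof (cases "2 \<le> kk")
  case True then show ?thesis using i l by (simp add: S_k2)
next
  case False
  then have "i = 1" using long_k1[OF od _ i l] by simp
  then show ?thesis using False sblk1 by (simp add: S_k1)
qed

lemma memS:
  assumes od: "odd n2" and c: "c \<in> SS"
  shows "c \<in> {1..n3} \<and> c = sblk n1 n3 (bk c) \<and> 2 \<le> lb (bk c) \<and> (2 \<le> kk \<longrightarrow> ff < lb (bk c))"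
proof (cases "2 \<le> kk")
  case True
  then obtain i where i: "i \<in> {1..n1}" "ff < lb i" "c = sblk n1 n3 i" using c by (auto simp: S_k2)
  have b: "bk c = i" using sblk_props(2)[OF i(1)] i(3) by simp
  have "2 \<le> lb i" using i(2) ff_ge1[OF od] by linarith
  then show ?thesis using sblk_props(1)[OF i(1)] i b by simp
next
  case False
  then have "c = 1" using c by (simp add: S_k1)
  then show ?thesis using False blk1 sblk1 ell1 by simp
qed

lemma memS1:
  assumes od: "odd n2" and c: "c \<in> S1"
  shows "c \<in> {1..n3} \<and> c = sblk n1 n3 (bk c) + 1 \<and> c - 1 \<in> SS \<and> bk c = bk (c - 1)"
proof -
  obtain s where s: "s \<in> SS" "c = s + 1" using c by blast
  have m: "s \<in> {1..n3}" "s = sblk n1 n3 (bk s)" "2 \<le> lb (bk s)" using memS[OF od s(1)] by blast+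
  have bi: "bk s \<in> {1..n1}" using blk_props(1)[OF m(1)] .
  have "sblk n1 n3 (bk s) + 1 \<in> {1..n3}" "bk (sblk n1 n3 (bk s) + 1) = bk s"
    using sblk_props(3,4)[OF bi m(3)] by blast+
  then show ?thesis using s m by simp
qed

lemma card_S_k2: assumes "2 \<le> kk" shows "card SS \<le> kk"
proof -
  have "card SS \<le> card {i \<in> {1..n1}. ff < lb i}" unfolding S_k2[OF assms] by (rule card_image_le) simp
  then show ?thesis unfolding kcnt_def' .
qed

lemma rank_S: assumes "odd n2" shows "n3 - card SS \<le> rank_out SS n3" "n3 - card SS \<le> rank_out S1 n3"
proof -
  show "n3 - card SS \<le> rank_out SS n3" using rk_total[OF S_fin] by blast
  have "card S1 \<le> card SS" by (rule card_image_le[OF S_fin])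
  then show "n3 - card SS \<le> rank_out S1 n3" using rk_total[of S1 n3] S_fin by simp
qed

lemma yL_S: "odd n2 \<Longrightarrow> c \<in> SS \<Longrightarrow> yL n1 n2 n3 c = n2" unfolding yL_def by simp
lemma yL_nS: "odd n2 \<Longrightarrow> c \<notin> SS \<Longrightarrow> yL n1 n2 n3 c = (rank_out SS c - 1) mod ff + 1"
  unfolding yL_def ff_def by simp
lemma yR_S: "odd n2 \<Longrightarrow> c \<in> S1 \<Longrightarrow> yR n1 n2 n3 c = n2" unfolding yR_def by simp
lemma yR_nS: "odd n2 \<Longrightarrow> c \<notin> S1 \<Longrightarrow> yR n1 n2 n3 c = ff + (rank_out S1 c - 1) mod ff + 1"
  unfolding yR_def ff_def by simp

lemma yL_bound: "odd n2 \<Longrightarrow> c \<notin> SS \<Longrightarrow> 1 \<le> yL n1 n2 n3 c \<and> yL n1 n2 n3 c \<le> ff"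
proof -
  assume a: "odd n2" "c \<notin> SS"
  have "(rank_out SS c - 1) mod ff < ff" using ff_ge1[OF a(1)] by simp
  then show ?thesis using yL_nS[OF a] by linarith
qed

lemma yR_bound: "odd n2 \<Longrightarrow> c \<notin> S1 \<Longrightarrow> ff < yR n1 n2 n3 c \<and> yR n1 n2 n3 c \<le> 2 * ff"
proof -
  assume a: "odd n2" "c \<notin> S1"
  have "(rank_out S1 c - 1) mod ff < ff" using ff_ge1[OF a(1)] by simp
  then show ?thesis using yR_nS[OF a] by linarith
qed

lemma YdNS:
  assumes od: "odd n2" and c: "c \<in> {1..n3}" "c' \<in> {1..n3}" "bk c = bk c'" "c < c'" "c \<notin> SS" "c' \<notin> SS"
  shows "(rank_out SS c - 1) mod ff \<noteq> (rank_out SS c' - 1) mod ff"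
proof -
  have t1: "1 \<le> rank_out SS c" using rk_pos[of c SS] c(1,5) by simp
  have t2: "rank_out SS c < rank_out SS c'" using rk_strict[OF c(4,6)] .
  have t3: "rank_out SS c' \<le> rank_out SS c + (c' - c)" using rk_mono[of c c' SS] c(4) by simp
  have bl: "c' - c < lb (bk c)" using blk_diff[OF c(1-4)] .
  have lo: "lb (bk c) \<le> Suc ff" using ell_le_odd[OF od] .
  have "c' - c < ff"
  proof (rule ccontr)
    assume "\<not> c' - c < ff"
    then have e: "c' - c = ff" "lb (bk c) = Suc ff" using bl lo by linarith+
    have bi: "bk c \<in> {1..n1}" using blk_props(1)[OF c(1)] .
    have p1: "LL (bk c) < c" using blk_props(2)[OF c(1)] by blast
    have p2: "c' \<le> LL (bk c) + lb (bk c)" using blk_props(3)[OF c(2)] c(3) by simp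
    have "c' = c + ff" using e(1) c(4) by linarith
    then have "c = LL (bk c) + 1" using e(2) p1 p2 by linarith
    then have "c = sblk n1 n3 (bk c)" by (simp add: sblk_def)
    moreover have "sblk n1 n3 (bk c) \<in> SS" using longS[OF od bi] e by simp
    ultimately show False using c(5) by simp
  qed
  then have "rank_out SS c' - rank_out SS c < ff" using t3 by linarith
  then show ?thesis using mod_dist[OF t1 t2] by blast
qed

lemma RdNS:
  assumes od: "odd n2" and c: "c \<in> {1..n3}" "c' \<in> {1..n3}" "bk c = bk c'" "c < c'" "c \<notin> S1" "c' \<notin> S1"
  shows "(rank_out S1 c - 1) mod ff \<noteq> (rank_out S1 c' - 1) mod ff"
proof -
  have t1: "1 \<le> rank_out S1 c" using rk_pos[of c S1] c(1,5) by simp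
  have t2: "rank_out S1 c < rank_out S1 c'" using rk_strict[OF c(4,6)] .
  have t3: "rank_out S1 c' \<le> rank_out S1 c + (c' - c)" using rk_mono[of c c' S1] c(4) by simp
  have bl: "c' - c < lb (bk c)" using blk_diff[OF c(1-4)] .
  have lo: "lb (bk c) \<le> Suc ff" using ell_le_odd[OF od] .
  have "rank_out S1 c' - rank_out S1 c < ff"
  proof (cases "c' - c < ff")
    case True then show ?thesis using t3 by linarith
  next
    case False
    then have e: "c' - c = ff" "lb (bk c) = Suc ff" using bl lo by linarith+
    have bi: "bk c \<in> {1..n1}" using blk_props(1)[OF c(1)] .
    have p1: "LL (bk c) < c" using blk_props(2)[OF c(1)] by blast
    have p2: "c' \<le> LL (bk c) + lb (bk c)" using blk_props(3)[OF c(2)] c(3) by simp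
    have "c' = c + ff" using e(1) c(4) by linarith
    then have "c = LL (bk c) + 1" using e(2) p1 p2 by linarith
    then have "c = sblk n1 n3 (bk c)" by (simp add: sblk_def)
    moreover have "sblk n1 n3 (bk c) \<in> SS" using longS[OF od bi] e by simp
    ultimately have cS: "c \<in> SS" by simp
    have c1: "c + 1 \<in> S1" by (rule image_eqI[where x=c]) (simp_all add: cS)
    have c2: "c < c + 1" "c + 1 \<le> c'" using e c(4) ff_ge1[OF od] by linarith+
    have "rank_out S1 c' + 1 \<le> rank_out S1 c + (c' - c)" by (rule rk_skip[OF c2 c1])
    then show ?thesis using e t2 by linarith
  qed
  then show ?thesis using mod_dist[OF t1 t2] by blast
qed

lemma Lrich:
  assumes od: "odd n2" and v: "1 \<le> v" "v \<le> ff" and t: "v + j * ff \<le> rank_out SS n3"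
  shows "\<exists>c\<in>{1..n3}. c \<notin> SS \<and> rank_out SS c = v + j * ff \<and> yL n1 n2 n3 c = v"
proof -
  obtain c where c: "c \<in> {1..n3}" "c \<notin> SS" "rank_out SS c = v + j * ff"
    using rk_surj[of "v + j * ff" SS n3] t v by auto
  have "yL n1 n2 n3 c = (v + j * ff - 1) mod ff + 1" using yL_nS[OF od c(2)] c(3) by simp
  also have "\<dots> = v" using mod_col[OF v, of j] v by simp
  finally show ?thesis using c by blast
qed

lemma Rrich:
  assumes od: "odd n2" and v: "1 \<le> v" "v \<le> ff" and t: "v + j * ff \<le> rank_out S1 n3"
  shows "\<exists>c\<in>{1..n3}. c \<notin> S1 \<and> rank_out S1 c = v + j * ff \<and> yR n1 n2 n3 c = ff + v"
proof -
  obtain c where c: "c \<in> {1..n3}" "c \<notin> S1" "rank_out S1 c = v + j * ff"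
    using rk_surj[of "v + j * ff" S1 n3] t v by auto
  have "yR n1 n2 n3 c = ff + (v + j * ff - 1) mod ff + 1" using yR_nS[OF od c(2)] c(3) by simp
  also have "\<dots> = ff + v" using mod_col[OF v, of j] v by simp
  finally show ?thesis using c by blast
qed

lemma n3_ff: assumes "odd n2" shows "3 * ff + 2 \<le> n3"
proof -
  have "3 * n2 \<le> 2 * n3" using h5 by simp
  then show ?thesis using n2_odd[OF assms] by linarith
qed

end



context MC begin

lemma Rd_odd:
  assumes od: "odd n2" and c: "c \<in> {1..n3}" "c' \<in> {1..n3}" "bk c = bk c'"
    and e: "yR n1 n2 n3 c = yR n1 n2 n3 c'"
  shows "c = c'"
proof (rule ccontr)
  assume ne: "c \<noteq> c'"
  have n2e: "n2 = 2 * ff + 1" using n2_odd[OF od] .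
  show False
  proof (cases "c \<in> S1")
    case True
    show False
    proof (cases "c' \<in> S1")
      case True
      then have "c' = sblk n1 n3 (bk c') + 1" using memS1[OF od] by blast
      moreover have "c = sblk n1 n3 (bk c) + 1" using memS1[OF od \<open>c \<in> S1\<close>] by blast
      ultimately show False using ne c(3) by simp
    next
      case False
      then show False using yR_S[OF od True] yR_bound[OF od False] e n2e by linarith
    qed
  next
    case F1: False
    show False
    proof (cases "c' \<in> S1")
      case True
      then show False using yR_S[OF od True] yR_bound[OF od F1] e n2e by linarith
    next
      case F2: False
      have "(rank_out S1 c - 1) mod ff \<noteq> (rank_out S1 c' - 1) mod ff"
      proof (cases "c < c'")
        case True then show ?thesis using RdNS[OF od c True F1 F2] by blast
      next
        case False
        then have "c' < c" using ne by linarith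
        then show ?thesis using RdNS[OF od c(2,1) c(3)[symmetric] _ F2 F1] by metis
      qed
      then show False using e yR_nS[OF od F1] yR_nS[OF od F2] by simp
    qed
  qed
qed

lemma YdNS2:
  assumes od: "odd n2" and c: "c \<in> {1..n3}" "c' \<in> {1..n3}" "bk c = bk c'" "c \<noteq> c'" "c \<notin> SS" "c' \<notin> SS"
  shows "yL n1 n2 n3 c \<noteq> yL n1 n2 n3 c'"
proof -
  have "(rank_out SS c - 1) mod ff \<noteq> (rank_out SS c' - 1) mod ff"
  proof (cases "c < c'")
    case True then show ?thesis using YdNS[OF od c(1-3) True c(5,6)] by blast
  next
    case False
    then have "c' < c" using c(4) by linarith
    then show ?thesis using YdNS[OF od c(2,1) c(3)[symmetric] _ c(6,5)] by metis
  qed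
  then show ?thesis using yL_nS[OF od c(5)] yL_nS[OF od c(6)] by simp
qed

lemma odd2_case:
  assumes od: "odd n2" and k: "2 \<le> kk"
  shows "cone n1 n2 n3 bk (yL n1 n2 n3) (yR n1 n2 n3)"
proof -
  let ?Y = "yL n1 n2 n3" and ?R = "yR n1 n2 n3"
  have n2e: "n2 = 2 * ff + 1" using n2_odd[OF od] .
  have f1: "1 \<le> ff" using ff_ge1[OF od] .
  have Yd: "c = c'" if c: "c \<in> {1..n3}" "c' \<in> {1..n3}" "bk c = bk c'" "?Y c = ?Y c'" for c c'
  proof (rule ccontr)
    assume ne: "c \<noteq> c'"
    show False
    proof (cases "c \<in> SS")
      case True
      show False
      proof (cases "c' \<in> SS")
        case True
        then have "c' = sblk n1 n3 (bk c')" using memS[OF od] by blast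
        moreover have "c = sblk n1 n3 (bk c)" using memS[OF od \<open>c \<in> SS\<close>] by blast
        ultimately show False using ne c(3) by simp
      next
        case False
        then show False using yL_S[OF od True] yL_bound[OF od False] c(4) n2e by linarith
      qed
    next
      case F1: False
      show False
      proof (cases "c' \<in> SS")
        case True
        then show False using yL_S[OF od True] yL_bound[OF od F1] c(4) n2e by linarith
      next
        case F2: False
        then show False using YdNS2[OF od c(1-3) ne F1 F2] c(4) by blast
      qed
    qed
  qed
  have Rd: "c = c'" if c: "c \<in> {1..n3}" "c' \<in> {1..n3}" "bk c = bk c'" "?R c = ?R c'" for c c'
    using Rd_odd[OF od c] .
  have YRn2: "c \<in> SS \<and> c' \<in> S1" if "?Y c = ?R c'" for c c'
  proof -
    have "c \<in> SS"
    proof (rule ccontr)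
      assume "c \<notin> SS"
      then have "?Y c \<le> ff" using yL_bound[OF od] by blast
      moreover have "ff < ?R c'" using yR_bound[OF od, of c'] yR_S[OF od, of c'] n2e by (cases "c' \<in> S1") auto
      ultimately show False using that by linarith
    qed
    moreover have "c' \<in> S1"
    proof (rule ccontr)
      assume "c' \<notin> S1"
      then have "?R c' \<le> 2 * ff" using yR_bound[OF od] by blast
      moreover have "?Y c = n2" using yL_S[OF od \<open>c \<in> SS\<close>] .
      ultimately show False using that n2e by linarith
    qed
    ultimately show ?thesis by blast
  qed
  show ?thesis
  proof (rule cone_of)
    fix c assume c: "c \<in> {1..n3}"
    show "?Y c \<in> {1..n2}" using yL_S[OF od, of c] yL_bound[OF od, of c] n2e h2 by (cases "c \<in> SS") auto
    show "?R c \<in> {1..n2}" using yR_S[OF od, of c] yR_bound[OF od, of c] n2e h2 by (cases "c \<in> S1") auto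
    show "?Y c \<noteq> ?R c"
    proof
      assume "?Y c = ?R c"
      then have "c \<in> SS" "c \<in> S1" using YRn2 by blast+
      then have "c = sblk n1 n3 (bk c)" "c = sblk n1 n3 (bk c) + 1" using memS[OF od] memS1[OF od] by blast+
      then show False by simp
    qed
  next
    fix c c' assume "c \<in> {1..n3}" "c' \<in> {1..n3}" "bk c = bk c'"
    then show "?Y c = ?Y c' \<Longrightarrow> c = c'" "?R c = ?R c' \<Longrightarrow> c = c'" using Yd Rd by blast+
  next
    fix c c' assume c: "c \<in> {1..n3}" "c' \<in> {1..n3}" "?Y c = ?R c'"
    then have m: "c \<in> SS" "c' \<in> S1" using YRn2 by blast+
    have l1: "ff < lb (bk c)" using memS[OF od m(1)] k by blast
    have m1: "c' - 1 \<in> SS" "bk c' = bk (c' - 1)" using memS1[OF od m(2)] by blast+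
    have l2: "ff < lb (bk c')" using memS[OF od m1(1)] k m1(2) by simp
    have b: "bk c \<in> {1..n1}" "bk c' \<in> {1..n1}" using blk_props(1) c(1,2) by blast+
    show "bk c \<noteq> sgm (bk c')" using nonadj[OF od b(2) b(1) l2 l1] .
    show "bk c' \<noteq> sgm (bk c)" using nonadj[OF od b(1) b(2) l1 l2] .
  next
    fix b a c assume b: "b \<in> {1..n2}"
    have rk: "3 * ff \<le> rank_out SS n3" "3 * ff \<le> rank_out S1 n3"
      using rank_S[OF od] card_S_k2[OF k] kcnt_bound[OF od k] by linarith+
    have "b \<le> ff \<or> (ff < b \<and> b \<le> 2 * ff) \<or> b = n2" using b n2e by auto
    then consider "b \<le> ff" | "ff < b" "b \<le> 2 * ff" | "b = n2" by blast
    then show "\<exists>c0\<in>{1..n3}. (?Y c0 = b \<and> bk c0 \<noteq> a \<and> c0 \<noteq> c) \<or> (?R c0 = b \<and> sgm (bk c0) \<noteq> a \<and> c0 \<noteq> c)"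
    proof cases
      case 1
      have b1: "1 \<le> b" using b by simp
      obtain x0 where x0: "x0 \<in> {1..n3}" "x0 \<notin> SS" "rank_out SS x0 = b + 0 * ff" "?Y x0 = b"
        using Lrich[OF od b1 1, of 0] rk 1 by auto
      obtain x1 where x1: "x1 \<in> {1..n3}" "x1 \<notin> SS" "rank_out SS x1 = b + 1 * ff" "?Y x1 = b"
        using Lrich[OF od b1 1, of 1] rk 1 by auto
      obtain x2 where x2: "x2 \<in> {1..n3}" "x2 \<notin> SS" "rank_out SS x2 = b + 2 * ff" "?Y x2 = b"
        using Lrich[OF od b1 1, of 2] rk 1 by auto
      have d: "x0 \<noteq> x1" "x0 \<noteq> x2" "x1 \<noteq> x2" using x0(3) x1(3) x2(3) f1 by auto
      show ?thesis by (rule pickL3[OF Yd x0(1) x1(1) x2(1) d x0(4) x1(4) x2(4)]) blast+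
    next
      case 2
      define v where "v = b - ff"
      have v: "1 \<le> v" "v \<le> ff" "b = ff + v" using 2 unfolding v_def by auto
      obtain x0 where x0: "x0 \<in> {1..n3}" "x0 \<notin> S1" "rank_out S1 x0 = v + 0 * ff" "?R x0 = ff + v"
        using Rrich[OF od v(1,2), of 0] rk v by auto
      obtain x1 where x1: "x1 \<in> {1..n3}" "x1 \<notin> S1" "rank_out S1 x1 = v + 1 * ff" "?R x1 = ff + v"
        using Rrich[OF od v(1,2), of 1] rk v by auto
      obtain x2 where x2: "x2 \<in> {1..n3}" "x2 \<notin> S1" "rank_out S1 x2 = v + 2 * ff" "?R x2 = ff + v"
        using Rrich[OF od v(1,2), of 2] rk v by auto
      have d: "x0 \<noteq> x1" "x0 \<noteq> x2" "x1 \<noteq> x2" using x0(3) x1(3) x2(3) f1 by auto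
      have y: "?R x0 = b" "?R x1 = b" "?R x2 = b" using x0(4) x1(4) x2(4) v(3) by simp_all
      show ?thesis by (rule pickR3[OF Rd x0(1) x1(1) x2(1) d y]) blast+
    next
      case 3
      obtain i j where ij: "i \<in> {i \<in> {1..n1}. ff < lb i}" "j \<in> {i \<in> {1..n1}. ff < lb i}" "i \<noteq> j"
        using card2_obtain[of "{i \<in> {1..n1}. ff < lb i}"] k unfolding kcnt_def' by blast
      have i: "i \<in> {1..n1}" "ff < lb i" and j: "j \<in> {1..n1}" "ff < lb j" using ij by blast+
      have li: "2 \<le> lb i" and lj: "2 \<le> lb j" using i j f1 by linarith+
      define u1 where "u1 = sblk n1 n3 i"
      define u2 where "u2 = sblk n1 n3 j"
      have su1: "u1 \<in> SS" "u2 \<in> SS" using longS[OF od i(1,2)] longS[OF od j(1,2)] unfolding u1_def u2_def by blast+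
      have cu: "u1 \<in> {1..n3}" "u2 \<in> {1..n3}" "u1 + 1 \<in> {1..n3}" "u2 + 1 \<in> {1..n3}"
        using sblk_props(1,3)[OF i(1)] sblk_props(1,3)[OF j(1)] li lj unfolding u1_def u2_def by blast+
      have bu: "bk u1 = i" "bk u2 = j" "bk (u1 + 1) = i" "bk (u2 + 1) = j"
        using sblk_props(2,4)[OF i(1)] sblk_props(2,4)[OF j(1)] li lj unfolding u1_def u2_def by blast+
      have d: "u1 \<noteq> u2" "u1 + 1 \<noteq> u2 + 1" "u1 \<noteq> u1 + 1" "u1 \<noteq> u2 + 1" "u2 \<noteq> u1 + 1" "u2 \<noteq> u2 + 1"
        using bu ij(3) by (metis n_not_Suc_n add.commute plus_1_eq_Suc)+
      have s1: "u1 + 1 \<in> S1" "u2 + 1 \<in> S1" using su1 by blast+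
      have y: "?Y u1 = b" "?Y u2 = b" "?R (u1 + 1) = b" "?R (u2 + 1) = b"
        using yL_S[OF od su1(1)] yL_S[OF od su1(2)] yR_S[OF od s1(1)] yR_S[OF od s1(2)] 3 by simp_all
      show ?thesis by (rule pick22[OF Yd Rd cu d y]) blast+
    qed
  qed
qed

end



context MC begin

lemma odd1_case:
  assumes od: "odd n2" and k: "\<not> 2 \<le> kk" and z: "z \<in> {1..n3}" "yL n1 n2 n3 z = 1" "bk z \<notin> {1, 2, n1}"
  shows "cone n1 n2 n3 bk ((yL n1 n2 n3)(z := n2)) (yR n1 n2 n3)"
proof -
  let ?Y = "(yL n1 n2 n3)(z := n2)" and ?R = "yR n1 n2 n3"
  have n2e: "n2 = 2 * ff + 1" using n2_odd[OF od] .
  have f1: "1 \<le> ff" using ff_ge1[OF od] .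
  have S: "SS = {1}" using S_k1[OF k] .
  have S1e: "S1 = {2}" using S by simp
  have z12: "z \<noteq> 1" "z \<noteq> 2" using z(3) blk1 by auto
  have bz: "bk z \<in> {1..n1}" using blk_props(1)[OF z(1)] .
  have i1: "1 \<in> SS" unfolding S by simp
  have Y1: "?Y 1 = n2" using yL_S[OF od i1] z12(1) by simp
  have Yz: "?Y z = n2" by simp
  have Yo: "?Y c = yL n1 n2 n3 c \<and> 1 \<le> ?Y c \<and> ?Y c \<le> ff" if "c \<noteq> 1" "c \<noteq> z" for c
  proof -
    have "c \<notin> SS" unfolding S using that by simp
    then show ?thesis using yL_bound[OF od] that(2) by simp
  qed
  have Yn2: "?Y c = n2 \<longleftrightarrow> c = 1 \<or> c = z" for c
  proof (cases "c = 1 \<or> c = z")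
    case True then show ?thesis using Y1 Yz by blast
  next
    case False then show ?thesis using Yo[of c] n2e by auto
  qed
  have i2: "2 \<in> S1" unfolding S1e by simp
  have R2: "?R 2 = n2" using yR_S[OF od i2] .
  have Ro: "ff < ?R c \<and> ?R c \<le> 2 * ff" if "c \<noteq> 2" for c
  proof -
    have "c \<notin> S1" unfolding S1e using that by simp
    then show ?thesis using yR_bound[OF od] by blast
  qed
  have Yd: "c = c'" if c: "c \<in> {1..n3}" "c' \<in> {1..n3}" "bk c = bk c'" "?Y c = ?Y c'" for c c'
  proof (rule ccontr)
    assume ne: "c \<noteq> c'"
    show False
    proof (cases "?Y c = n2")
      case True
      then have a: "c = 1 \<or> c = z" using Yn2[of c] by blast
      have "?Y c' = n2" using True c(4) by simp
      then have a': "c' = 1 \<or> c' = z" using Yn2[of c'] by blast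
      have bz1: "bk z \<noteq> 1" using z(3) by simp
      have "bk c \<noteq> bk c'"
      proof (cases "c = 1")
        case True
        then have "c' = z" using a' ne by blast
        then show ?thesis using True blk1(1) bz1 by simp
      next
        case False
        then have "c = z" "c' = 1" using a a' ne by blast+
        then show ?thesis using blk1(1) bz1 by simp
      qed
      then show False using c(3) by simp
    next
      case False
      then have a: "c \<noteq> 1" "c \<noteq> z" using Yn2[of c] by blast+
      have "?Y c' \<noteq> n2" using False c(4) by simp
      then have a': "c' \<noteq> 1" "c' \<noteq> z" using Yn2[of c'] by blast+
      have ns: "c \<notin> SS" "c' \<notin> SS" unfolding S using a a' by simp_all
      have "yL n1 n2 n3 c \<noteq> yL n1 n2 n3 c'" using YdNS2[OF od c(1-3) ne ns] .
      moreover have "?Y c = yL n1 n2 n3 c" "?Y c' = yL n1 n2 n3 c'" using a(2) a'(2) by simp_all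
      ultimately show False using c(4) by simp
    qed
  qed
  have Rd: "c = c'" if c: "c \<in> {1..n3}" "c' \<in> {1..n3}" "bk c = bk c'" "?R c = ?R c'" for c c'
    using Rd_odd[OF od c] .
  have YRn2: "(c = 1 \<or> c = z) \<and> c' = 2" if e: "?Y c = ?R c'" for c c'
  proof -
    have "c' = 2"
    proof (rule ccontr)
      assume "c' \<noteq> 2"
      then have r: "ff < ?R c'" "?R c' \<le> 2 * ff" using Ro by blast+
      show False
      proof (cases "c = 1 \<or> c = z")
        case True
        then have "?Y c = n2" using Yn2 by blast
        then show False using r e n2e by linarith
      next
        case False
        then have "?Y c \<le> ff" using Yo[of c] by blast
        then show False using r e by linarith
      qed
    qed
    then have "?Y c = n2" using e R2 by simp
    then show ?thesis using Yn2 \<open>c' = 2\<close> by blast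
  qed
  have sg1: "sgm 1 = 2" using h1 unfolding sgm_def by simp
  have bzn: "bk z \<noteq> n1" "bk z \<noteq> 1" "bk z \<noteq> 2" using z(3) by simp_all
  have sgz: "sgm (bk z) \<noteq> 1" "sgm (bk z) \<noteq> 2" using bzn bz unfolding sgm_def by simp_all
  show ?thesis
  proof (rule cone_of)
    fix c assume c: "c \<in> {1..n3}"
    show "?Y c \<in> {1..n2}"
    proof (cases "c = 1 \<or> c = z")
      case True then have "?Y c = n2" using Yn2 by blast
      then show ?thesis using h2 by simp
    next
      case False then have "1 \<le> ?Y c" "?Y c \<le> ff" using Yo[of c] by blast+
      then show ?thesis using n2e by simp
    qed
    show "?R c \<in> {1..n2}"
    proof (cases "c = 2")
      case True then show ?thesis using R2 h2 by simp
    next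
      case False then have "ff < ?R c" "?R c \<le> 2 * ff" using Ro[of c] by blast+
      then show ?thesis using n2e by simp
    qed
    show "?Y c \<noteq> ?R c"
    proof
      assume "?Y c = ?R c"
      then have "(c = 1 \<or> c = z) \<and> c = 2" using YRn2 by blast
      then show False using z12 by auto
    qed
  next
    fix c c' assume "c \<in> {1..n3}" "c' \<in> {1..n3}" "bk c = bk c'"
    then show "?Y c = ?Y c' \<Longrightarrow> c = c'" "?R c = ?R c' \<Longrightarrow> c = c'" using Yd Rd by blast+
  next
    fix c c' assume c: "c \<in> {1..n3}" "c' \<in> {1..n3}" "?Y c = ?R c'"
    then have m: "c = 1 \<or> c = z" "c' = 2" using YRn2 by blast+
    have bc': "bk c' = 1" using m(2) blk1(2) by simp
    show "bk c \<noteq> sgm (bk c')"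
    proof (cases "c = 1")
      case True then show ?thesis using bc' sg1 blk1(1) by simp
    next
      case False then have "c = z" using m(1) by blast
      then show ?thesis using bc' sg1 bzn by simp
    qed
    show "bk c' \<noteq> sgm (bk c)"
    proof (cases "c = 1")
      case True then show ?thesis using bc' sg1 blk1(1) by simp
    next
      case False then have "c = z" using m(1) by blast
      then show ?thesis using bc' sgz by simp
    qed
  next
    fix b a c assume b: "b \<in> {1..n2}"
    have n3f: "3 * ff + 2 \<le> n3" using n3_ff[OF od] .
    have cS: "card SS = 1" using S by simp
    have rk: "3 * ff + 1 \<le> rank_out SS n3" "3 * ff + 1 \<le> rank_out S1 n3"
      using rank_S[OF od] cS n3f by linarith+
    have "b \<le> ff \<or> (ff < b \<and> b \<le> 2 * ff) \<or> b = n2" using b n2e by auto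
    then consider "b \<le> ff" | "ff < b" "b \<le> 2 * ff" | "b = n2" by blast
    then show "\<exists>c0\<in>{1..n3}. (?Y c0 = b \<and> bk c0 \<noteq> a \<and> c0 \<noteq> c) \<or> (?R c0 = b \<and> sgm (bk c0) \<noteq> a \<and> c0 \<noteq> c)"
    proof cases
      case 1
      have b1: "1 \<le> b" using b by simp
      have P: "\<exists>c0\<in>{1..n3}. (?Y c0 = b \<and> bk c0 \<noteq> a \<and> c0 \<noteq> c) \<or> (?R c0 = b \<and> sgm (bk c0) \<noteq> a \<and> c0 \<noteq> c)"
        if y: "y1 \<in> {1..n3}" "y2 \<in> {1..n3}" "y3 \<in> {1..n3}" "y1 \<noteq> y2" "y1 \<noteq> y3" "y2 \<noteq> y3"
          "y1 \<noteq> z" "y2 \<noteq> z" "y3 \<noteq> z" "yL n1 n2 n3 y1 = b" "yL n1 n2 n3 y2 = b" "yL n1 n2 n3 y3 = b" for y1 y2 y3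
      proof -
        have yy: "?Y y1 = b" "?Y y2 = b" "?Y y3 = b" using y by simp_all
        show ?thesis by (rule pickL3[where R="?R", OF Yd y(1-6) yy(1) yy(2) yy(3)])
      qed
      obtain x0 where x0: "x0 \<in> {1..n3}" "x0 \<notin> SS" "rank_out SS x0 = b + 0 * ff" "yL n1 n2 n3 x0 = b"
        using Lrich[OF od b1 1, of 0] rk 1 by auto
      obtain x1 where x1: "x1 \<in> {1..n3}" "x1 \<notin> SS" "rank_out SS x1 = b + 1 * ff" "yL n1 n2 n3 x1 = b"
        using Lrich[OF od b1 1, of 1] rk 1 by auto
      obtain x2 where x2: "x2 \<in> {1..n3}" "x2 \<notin> SS" "rank_out SS x2 = b + 2 * ff" "yL n1 n2 n3 x2 = b"
        using Lrich[OF od b1 1, of 2] rk 1 by auto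
      have d: "x0 \<noteq> x1" "x0 \<noteq> x2" "x1 \<noteq> x2" using x0(3) x1(3) x2(3) f1 by auto
      show ?thesis
      proof (cases "b = 1")
        case False
        then have "x0 \<noteq> z" "x1 \<noteq> z" "x2 \<noteq> z" using x0(4) x1(4) x2(4) z(2) by auto
        then show ?thesis using P[OF x0(1) x1(1) x2(1) d] x0(4) x1(4) x2(4) by blast
      next
        case True
        obtain x3 where x3: "x3 \<in> {1..n3}" "x3 \<notin> SS" "rank_out SS x3 = b + 3 * ff" "yL n1 n2 n3 x3 = b"
          using Lrich[OF od b1 1, of 3] rk True by auto
        have d3: "x0 \<noteq> x3" "x1 \<noteq> x3" "x2 \<noteq> x3" using x0(3) x1(3) x2(3) x3(3) f1 by auto
        consider "x0 \<noteq> z" "x1 \<noteq> z" "x2 \<noteq> z" | "x0 = z" | "x1 = z" | "x2 = z" by blast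
        then show ?thesis
        proof cases
          case 1 then show ?thesis using P[OF x0(1) x1(1) x2(1) d] x0(4) x1(4) x2(4) by blast
        next
          case 2
          then have "x1 \<noteq> z" "x2 \<noteq> z" "x3 \<noteq> z" using d d3 by auto
          then show ?thesis using P[OF x1(1) x2(1) x3(1) d(3) d3(2,3)] x1(4) x2(4) x3(4) by blast
        next
          case 3
          then have "x0 \<noteq> z" "x2 \<noteq> z" "x3 \<noteq> z" using d d3 by auto
          then show ?thesis using P[OF x0(1) x2(1) x3(1) d(2) d3(1,3)] x0(4) x2(4) x3(4) by blast
        next
          case 4
          then have "x0 \<noteq> z" "x1 \<noteq> z" "x3 \<noteq> z" using d d3 by auto
          then show ?thesis using P[OF x0(1) x1(1) x3(1) d(1) d3(1,2)] x0(4) x1(4) x3(4) by blast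
        qed
      qed
    next
      case 2
      define v where "v = b - ff"
      have v: "1 \<le> v" "v \<le> ff" "b = ff + v" using 2 unfolding v_def by auto
      obtain x0 where x0: "x0 \<in> {1..n3}" "x0 \<notin> S1" "rank_out S1 x0 = v + 0 * ff" "?R x0 = ff + v"
        using Rrich[OF od v(1,2), of 0] rk v by auto
      obtain x1 where x1: "x1 \<in> {1..n3}" "x1 \<notin> S1" "rank_out S1 x1 = v + 1 * ff" "?R x1 = ff + v"
        using Rrich[OF od v(1,2), of 1] rk v by auto
      obtain x2 where x2: "x2 \<in> {1..n3}" "x2 \<notin> S1" "rank_out S1 x2 = v + 2 * ff" "?R x2 = ff + v"
        using Rrich[OF od v(1,2), of 2] rk v by auto
      have d: "x0 \<noteq> x1" "x0 \<noteq> x2" "x1 \<noteq> x2" using x0(3) x1(3) x2(3) f1 by auto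
      have y: "?R x0 = b" "?R x1 = b" "?R x2 = b" using x0(4) x1(4) x2(4) v(3) by simp_all
      show ?thesis by (rule pickR3[OF Rd x0(1) x1(1) x2(1) d y]) blast+
    next
      case 3
      have d: "1 \<noteq> z" "(1::nat) \<noteq> 2" "z \<noteq> 2" using z12 by auto
      have bb: "bk 1 \<noteq> bk z" "bk 1 \<noteq> sgm (bk 2)" "bk z \<noteq> sgm (bk 2)" using blk1 sg1 z(3) by auto
      have y: "?Y 1 = b" "?Y z = b" "?R 2 = b" using Y1 Yz R2 3 by simp_all
      show ?thesis by (rule pick21[where Y="?Y" and R="?R", OF blk1(3) z(1) blk1(4) d bb y])
    qed
  qed
qed

end



lemma cone_res:
  assumes c: "cone n1 n2 n3 (blk n1 n3) Y (yR n1 n2 n3)"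
    and W: "W = WL n1 n3 Y \<union> WR n1 n2 n3"
  shows "resolving n1 n2 n3 W \<and>
         resolving (n1 + 1) (n2 + 1) (n3 + 1) (insert (n1 + 1, n2 + 1, n3 + 1) W)"
proof -
  have "cone.WW n1 n3 (blk n1 n3) Y (yR n1 n2 n3) = W"
    unfolding cone.WW_def[OF c] W WL_def WR_def by simp
  then show ?thesis using cone.resolving1[OF c] cone.resolving2[OF c] by simp
qed

theorem mainTheorem9:
  fixes n1 n2 n3 :: nat and W :: "vtx set"
  assumes "3 \<le> n1" and "3 \<le> n2" and "n1 \<le> n3" and "n2 \<le> n3"
    and "3 * max n1 n2 \<le> 2 * n3" and "2 * n3 \<le> n1 * n2"
    and "middle_cone n1 n2 n3 W"
  shows "resolving n1 n2 n3 W \<and>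
         resolving (n1 + 1) (n2 + 1) (n3 + 1) (insert (n1 + 1, n2 + 1, n3 + 1) W)"
proof -
  interpret MC n1 n2 n3 using assms(1-6) by unfold_locales
  show ?thesis
  proof (cases "even n2 \<or> 2 \<le> kcnt n1 n2 n3")
    case True
    then have W: "W = WL n1 n3 (yL n1 n2 n3) \<union> WR n1 n2 n3" using assms(7) unfolding middle_cone_def by simp
    have c: "cone n1 n2 n3 (blk n1 n3) (yL n1 n2 n3) (yR n1 n2 n3)"
    proof (cases "even n2")
      case True then show ?thesis by (rule even_case)
    next
      case False then show ?thesis using odd2_case \<open>even n2 \<or> 2 \<le> kcnt n1 n2 n3\<close> by blast
    qed
    show ?thesis by (rule cone_res[OF c W])
  next
    case False
    then obtain z where z: "z \<in> {1..n3}" "yL n1 n2 n3 z = 1" "blk n1 n3 z \<notin> {1, 2, n1}"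
      and W: "W = WL n1 n3 ((yL n1 n2 n3)(z := n2)) \<union> WR n1 n2 n3"
      using assms(7) unfolding middle_cone_def by auto
    have od: "odd n2" and k: "\<not> 2 \<le> kcnt n1 n2 n3" using False by auto
    show ?thesis by (rule cone_res[OF odd1_case[OF od k z] W])
  qed
qed


end
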